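(* Let $(W,\lambda)$ be an initial algebra of $N\otimes-$ on $\mathsf{SquaMS}$ and $V=C(W)$ its Cauchy completion. Then $V$ is isomorphic (in $\mathsf{SquaMS}$) to $U_0$ with the taxicab metric.
   Context: Let $M_0=\{(r,s)\in[0,1]^2: r\in\{0,1\}\text{ or } s\in\{0,1\}\}$. A square metric space is a pair $(X,S_X)$ with $X$ a metric space with all distances at most $2$ and $S_X\colon M_0\to X$ injective such that (sq1) for $i\in\{0,1\}$, $r,s\in[0,1]$: $d_X(S_X(i,r),S_X(i,s))=|s-r|$ and $d_X(S_X(r,i),S_X(s,i))=|s-r|$; (sq2) $d_X(S_X(r,s),S_X(t,u))\ge|r-t|+|s-u|$. $\mathsf{SquaMS}$: these objects, with short maps $f$ satisfying $f\circ S_X=S_Y$ as morphisms. Let $N=\{0,1,2\}^2$, also viewed as points of $\mathbb{R}^2$. For $X$ in $\mathsf{SquaMS}$, $N\otimes X=(N\times X)/\!\sim$, where $\sim$ is generated by $(m,S_X(p))\sim(n,S_X(q))$ whenever $m,n\in N$ differ by exactly $1$ in exactly one coordinate and $(m+p)/3=(n+q)/3$; $n\otimes x$ is the class of $(n,x)$. With $d((a,u),(b,v))=\frac13 d_X(u,v)$ if $a=b$ and $2$ otherwise, $N\otimes X$ gets the quotient metric. $S_{N\otimes X}(p)=n\otimes S_X(3p-n)$ for any $n\in N$ with $p\in(n+[0,1]^2)/3$; $(N\otimes f)(n\otimes x)=n\otimes f(x)$. The Cauchy completion $C(X)$ has $S_{C(X)}(p)$ the class of the constant sequence $S_X(p)$.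 $U_0=[0,1]^2$ with the taxicab metric $|x-x'|+|y-y'|$ and $S_{U_0}$ the inclusion of $M_0$. *)

theory Defs
  imports "HOL-Analysis.Analysis"
begin

definition metric_on :: "'a set \<Rightarrow> ('a \<Rightarrow> 'a \<Rightarrow> real) \<Rightarrow> bool" where
  "metric_on X d \<longleftrightarrow>
     (\<forall>x\<in>X. \<forall>y\<in>X. 0 \<le> d x y \<and> d x y = d y x \<and> (d x y = 0 \<longleftrightarrow> x = y)) \<and>
     (\<forall>x\<in>X. \<forall>y\<in>X. \<forall>z\<in>X. d x z \<le> d x y + d y z)"

definition M0 :: "(real \<times> real) set" where
  "M0 = {(r, s). 0 \<le> r \<and> r \<le> 1 \<and> 0 \<le> s \<and> s \<le> 1 \<and> (r \<in> {0, 1} \<or> s \<in> {0, 1})}"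

definition square_ms :: "'a set \<Rightarrow> ('a \<Rightarrow> 'a \<Rightarrow> real) \<Rightarrow> (real \<times> real \<Rightarrow> 'a) \<Rightarrow> bool" where
  "square_ms X d S \<longleftrightarrow>
     metric_on X d \<and> (\<forall>x\<in>X. \<forall>y\<in>X. d x y \<le> 2) \<and>
     S ` M0 \<subseteq> X \<and> inj_on S M0 \<and>
     (\<forall>i\<in>{0, 1}. \<forall>r\<in>{0..1}. \<forall>s\<in>{0..1}.
        d (S (i, r)) (S (i, s)) = \<bar>s - r\<bar> \<and> d (S (r, i)) (S (s, i)) = \<bar>s - r\<bar>) \<and>
     (\<forall>p\<in>M0. \<forall>q\<in>M0. d (S p) (S q) \<ge> \<bar>fst p - fst q\<bar> + \<bar>snd p - snd q\<bar>)"

definition sq_hom :: "'a set \<Rightarrow> ('a \<Rightarrow> 'a \<Rightarrow> real) \<Rightarrow> (real \<times> real \<Rightarrow> 'a) \<Rightarrow>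
    'b set \<Rightarrow> ('b \<Rightarrow> 'b \<Rightarrow> real) \<Rightarrow> (real \<times> real \<Rightarrow> 'b) \<Rightarrow> ('a \<Rightarrow> 'b) \<Rightarrow> bool" where
  "sq_hom X d S Y e T f \<longleftrightarrow>
     f ` X \<subseteq> Y \<and> (\<forall>x\<in>X. \<forall>y\<in>X. e (f x) (f y) \<le> d x y) \<and> (\<forall>p\<in>M0. f (S p) = T p)"

definition sq_isomorphic :: "'a set \<Rightarrow> ('a \<Rightarrow> 'a \<Rightarrow> real) \<Rightarrow> (real \<times> real \<Rightarrow> 'a) \<Rightarrow>
    'b set \<Rightarrow> ('b \<Rightarrow> 'b \<Rightarrow> real) \<Rightarrow> (real \<times> real \<Rightarrow> 'b) \<Rightarrow> bool" where
  "sq_isomorphic X d S Y e T \<longleftrightarrow>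
     (\<exists>f g. sq_hom X d S Y e T f \<and> sq_hom Y e T X d S g \<and>
            (\<forall>x\<in>X. g (f x) = x) \<and> (\<forall>y\<in>Y. f (g y) = y))"

definition Nset :: "(nat \<times> nat) set" where
  "Nset = {0, 1, 2} \<times> {0, 1, 2}"

definition adjN :: "nat \<times> nat \<Rightarrow> nat \<times> nat \<Rightarrow> bool" where
  "adjN m n \<longleftrightarrow>
     (fst m = fst n \<and> (snd m = snd n + 1 \<or> snd n = snd m + 1)) \<or>
     (snd m = snd n \<and> (fst m = fst n + 1 \<or> fst n = fst m + 1))"

definition gen_rel :: "(real \<times> real \<Rightarrow> 'a) \<Rightarrow> (((nat \<times> nat) \<times> 'a) \<times> ((nat \<times> nat) \<times> 'a)) set" where
  "gen_rel S = {((m, S p), (n, S q)) | m n p q.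
       m \<in> Nset \<and> n \<in> Nset \<and> adjN m n \<and> p \<in> M0 \<and> q \<in> M0 \<and>
       real (fst m) + fst p = real (fst n) + fst q \<and>
       real (snd m) + snd p = real (snd n) + snd q}"

definition tens_eq :: "(real \<times> real \<Rightarrow> 'a) \<Rightarrow> (((nat \<times> nat) \<times> 'a) \<times> ((nat \<times> nat) \<times> 'a)) set" where
  "tens_eq S = (gen_rel S \<union> (gen_rel S)\<inverse>)\<^sup>*"

definition tens_car :: "'a set \<Rightarrow> (real \<times> real \<Rightarrow> 'a) \<Rightarrow> ((nat \<times> nat) \<times> 'a) set set" where
  "tens_car X S = (Nset \<times> X) // tens_eq S"

definition base_dist :: "('a \<Rightarrow> 'a \<Rightarrow> real) \<Rightarrow> (nat \<times> nat) \<times> 'a \<Rightarrow> (nat \<times> nat) \<times> 'a \<Rightarrow> real" where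
  "base_dist d x y = (if fst x = fst y then d (snd x) (snd y) / 3 else 2)"

definition tens_dist :: "'a set \<Rightarrow> ('a \<Rightarrow> 'a \<Rightarrow> real) \<Rightarrow> (real \<times> real \<Rightarrow> 'a) \<Rightarrow>
    ((nat \<times> nat) \<times> 'a) set \<Rightarrow> ((nat \<times> nat) \<times> 'a) set \<Rightarrow> real" where
  "tens_dist X d S A B = Inf {(\<Sum>i<n. base_dist d (p i) (q i)) | n p q.
       0 < n \<and> (\<forall>i<n. p i \<in> Nset \<times> X \<and> q i \<in> Nset \<times> X) \<and>
       p 0 \<in> A \<and> q (n - 1) \<in> B \<and>
       (\<forall>i. Suc i < n \<longrightarrow> (q i, p (Suc i)) \<in> tens_eq S)}"

definition tens_S :: "(real \<times> real \<Rightarrow> 'a) \<Rightarrow> real \<times> real \<Rightarrow> ((nat \<times> nat) \<times> 'a) set" where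
  "tens_S S p = (let n = (SOME n. n \<in> Nset \<and>
                      real (fst n) / 3 \<le> fst p \<and> fst p \<le> (real (fst n) + 1) / 3 \<and>
                      real (snd n) / 3 \<le> snd p \<and> snd p \<le> (real (snd n) + 1) / 3)
                 in tens_eq S `` {(n, S (3 * fst p - real (fst n), 3 * snd p - real (snd n)))})"

definition tens_map :: "(real \<times> real \<Rightarrow> 'b) \<Rightarrow> ('a \<Rightarrow> 'b) \<Rightarrow>
    ((nat \<times> nat) \<times> 'a) set \<Rightarrow> ((nat \<times> nat) \<times> 'b) set" where
  "tens_map T f A = (let z = (SOME z. z \<in> A) in tens_eq T `` {(fst z, f (snd z))})"

definition is_alg :: "'a set \<Rightarrow> ('a \<Rightarrow> 'a \<Rightarrow> real) \<Rightarrow> (real \<times> real \<Rightarrow> 'a) \<Rightarrow>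
    (((nat \<times> nat) \<times> 'a) set \<Rightarrow> 'a) \<Rightarrow> bool" where
  "is_alg X d S lam \<longleftrightarrow> square_ms X d S \<and>
     sq_hom (tens_car X S) (tens_dist X d S) (tens_S S) X d S lam"

definition alg_hom :: "'a set \<Rightarrow> ('a \<Rightarrow> 'a \<Rightarrow> real) \<Rightarrow> (real \<times> real \<Rightarrow> 'a) \<Rightarrow>
    (((nat \<times> nat) \<times> 'a) set \<Rightarrow> 'a) \<Rightarrow>
    'b set \<Rightarrow> ('b \<Rightarrow> 'b \<Rightarrow> real) \<Rightarrow> (real \<times> real \<Rightarrow> 'b) \<Rightarrow>
    (((nat \<times> nat) \<times> 'b) set \<Rightarrow> 'b) \<Rightarrow> ('a \<Rightarrow> 'b) \<Rightarrow> bool" where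
  "alg_hom X d S lam Y e T mu h \<longleftrightarrow> sq_hom X d S Y e T h \<and>
     (\<forall>A\<in>tens_car X S. h (lam A) = mu (tens_map T h A))"

text \<open>Initial algebra, with initiality quantified over all algebras whose carrier lives in
  the same HOL type as the given one.\<close>

definition initial_alg :: "'a set \<Rightarrow> ('a \<Rightarrow> 'a \<Rightarrow> real) \<Rightarrow> (real \<times> real \<Rightarrow> 'a) \<Rightarrow>
    (((nat \<times> nat) \<times> 'a) set \<Rightarrow> 'a) \<Rightarrow> bool" where
  "initial_alg X d S lam \<longleftrightarrow> is_alg X d S lam \<and>
     (\<forall>(Y :: 'a set) e T mu. is_alg Y e T mu \<longrightarrow>
        (\<exists>h. alg_hom X d S lam Y e T mu h \<and>
             (\<forall>h'. alg_hom X d S lam Y e T mu h' \<longrightarrow> (\<forall>x\<in>X. h' x = h x))))"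

definition cauchy_seqs :: "'a set \<Rightarrow> ('a \<Rightarrow> 'a \<Rightarrow> real) \<Rightarrow> (nat \<Rightarrow> 'a) set" where
  "cauchy_seqs X d = {\<sigma>. (\<forall>n. \<sigma> n \<in> X) \<and>
      (\<forall>\<epsilon>>0. \<exists>N. \<forall>m\<ge>N. \<forall>n\<ge>N. d (\<sigma> m) (\<sigma> n) < \<epsilon>)}"

definition ceq :: "'a set \<Rightarrow> ('a \<Rightarrow> 'a \<Rightarrow> real) \<Rightarrow> ((nat \<Rightarrow> 'a) \<times> (nat \<Rightarrow> 'a)) set" where
  "ceq X d = {(\<sigma>, \<tau>). \<sigma> \<in> cauchy_seqs X d \<and> \<tau> \<in> cauchy_seqs X d \<and>
      (\<lambda>n. d (\<sigma> n) (\<tau> n)) \<longlonglongrightarrow> 0}"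

definition C_car :: "'a set \<Rightarrow> ('a \<Rightarrow> 'a \<Rightarrow> real) \<Rightarrow> (nat \<Rightarrow> 'a) set set" where
  "C_car X d = cauchy_seqs X d // ceq X d"

definition C_dist :: "('a \<Rightarrow> 'a \<Rightarrow> real) \<Rightarrow> (nat \<Rightarrow> 'a) set \<Rightarrow> (nat \<Rightarrow> 'a) set \<Rightarrow> real" where
  "C_dist d A B = lim (\<lambda>n. d ((SOME \<sigma>. \<sigma> \<in> A) n) ((SOME \<tau>. \<tau> \<in> B) n))"

definition C_S :: "'a set \<Rightarrow> ('a \<Rightarrow> 'a \<Rightarrow> real) \<Rightarrow> (real \<times> real \<Rightarrow> 'a) \<Rightarrow>
    real \<times> real \<Rightarrow> (nat \<Rightarrow> 'a) set" where
  "C_S X d S p = ceq X d `` {(\<lambda>n. S p)}"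

definition U0 :: "(real \<times> real) set" where
  "U0 = {0..1} \<times> {0..1}"

definition taxicab :: "real \<times> real \<Rightarrow> real \<times> real \<Rightarrow> real" where
  "taxicab x y = \<bar>fst x - fst y\<bar> + \<bar>snd x - snd y\<bar>"

end

theory Submission
  imports Defs
begin

definition pos :: "('b \<Rightarrow> real \<times> real) \<Rightarrow> (nat \<times> nat) \<times> 'b \<Rightarrow> real \<times> real" where
  "pos \<phi> z = ((real (fst (fst z)) + fst (\<phi> (snd z))) / 3, (real (snd (fst z)) + snd (\<phi> (snd z))) / 3)"

lemma taxi_tri: "taxicab x z \<le> taxicab x y + taxicab y z"
  unfolding taxicab_def by linarith
lemma taxi_sym: "taxicab x y = taxicab y x"
  unfolding taxicab_def by linarith
lemma taxi_nonneg: "0 \<le> taxicab x y"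
  unfolding taxicab_def by linarith
lemma taxi_zero: "taxicab x y = 0 \<longleftrightarrow> x = y"
  unfolding taxicab_def by (cases x; cases y) auto
lemma taxi_self[simp]: "taxicab x x = 0"
  unfolding taxicab_def by simp
lemma taxi_le2: "x \<in> U0 \<Longrightarrow> y \<in> U0 \<Longrightarrow> taxicab x y \<le> 2"
  unfolding taxicab_def U0_def by (cases x; cases y) auto

lemma M0_U0: "M0 \<subseteq> U0"
  unfolding M0_def U0_def by auto

lemma equiv_tens_eq: "equiv UNIV (tens_eq S)"
  unfolding tens_eq_def equiv_def
  by (auto simp: refl_on_def sym_rtrancl sym_Un_converse trans_rtrancl)

lemma pos_inv:
  assumes "\<forall>p\<in>M0. \<phi> (S p) = p" "(z1, z2) \<in> tens_eq S"
  shows "pos \<phi> z1 = pos \<phi> z2"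
  using assms(2) unfolding tens_eq_def
proof (induction rule: rtrancl_induct)
  case base
  then show ?case by simp
next
  case (step y z)
  have "pos \<phi> y = pos \<phi> z"
    using step(2) assms(1) unfolding gen_rel_def pos_def
    by (auto simp: prod_eq_iff)
  then show ?case using step by simp
qed

lemma gen_rel_sub: "S ` M0 \<subseteq> X \<Longrightarrow> gen_rel S \<subseteq> (Nset \<times> X) \<times> (Nset \<times> X)"
  unfolding gen_rel_def by auto

lemma tens_eq_closed:
  assumes "S ` M0 \<subseteq> X" "(x, z) \<in> tens_eq S" "x \<in> Nset \<times> X"
  shows "z \<in> Nset \<times> X"
  using assms(2,3) unfolding tens_eq_def
proof (induction rule: rtrancl_induct)
  case (step y z)
  then show ?case using gen_rel_sub[OF assms(1)] by blast
qed simp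

lemma in_tens_car_sub:
  assumes "S ` M0 \<subseteq> X" "A \<in> tens_car X S" shows "A \<subseteq> Nset \<times> X"
  using assms tens_eq_closed unfolding tens_car_def quotient_def by blast

lemma pos_U0:
  assumes "z \<in> Nset \<times> X" "\<forall>x\<in>X. \<phi> x \<in> U0"
  shows "pos \<phi> z \<in> U0"
proof -
  obtain a b x where z: "z = ((a, b), x)" "a \<in> {0,1,2}" "b \<in> {0,1,2}" "x \<in> X"
    using assms(1) unfolding Nset_def by auto
  have "\<phi> x \<in> U0" using assms(2) z by auto
  then have "0 \<le> fst (\<phi> x)" "fst (\<phi> x) \<le> 1" "0 \<le> snd (\<phi> x)" "snd (\<phi> x) \<le> 1"
    unfolding U0_def by (auto simp: mem_Times_iff)
  moreover have "real a \<le> 2" "real b \<le> 2" using z by auto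
  ultimately show ?thesis unfolding pos_def U0_def z by auto
qed

lemma base_bound:
  assumes "z \<in> Nset \<times> X" "w \<in> Nset \<times> X" "\<forall>x\<in>X. \<phi> x \<in> U0"
    "\<forall>x\<in>X. \<forall>y\<in>X. taxicab (\<phi> x) (\<phi> y) \<le> d x y"
  shows "taxicab (pos \<phi> z) (pos \<phi> w) \<le> base_dist d z w"
proof (cases "fst z = fst w")
  case True
  have "taxicab (pos \<phi> z) (pos \<phi> w) = taxicab (\<phi> (snd z)) (\<phi> (snd w)) / 3"
  proof -
    have e: "\<And>a u v::real. (a + u) / 3 - (a + v) / 3 = (u - v) / 3" by (simp add: field_simps)
    show ?thesis using True unfolding pos_def taxicab_def by (simp add: e)
  qed
  also have "\<dots> \<le> d (snd z) (snd w) / 3"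
    using assms(1,2,4) by (auto simp: mem_Times_iff)
  finally show ?thesis using True unfolding base_dist_def by simp
next
  case False
  then show ?thesis unfolding base_dist_def
    using taxi_le2[OF pos_U0[OF assms(1,3)] pos_U0[OF assms(2,3)]] by simp
qed

lemma same_class:
  assumes "A \<in> tens_car X S" "a \<in> A" "b \<in> A" shows "(a, b) \<in> tens_eq S"
proof -
  from assms(1) obtain x where "A = tens_eq S `` {x}"
    unfolding tens_car_def quotient_def by auto
  then have "(x, a) \<in> tens_eq S" "(x, b) \<in> tens_eq S" using assms by auto
  then show ?thesis using equiv_tens_eq[of S] unfolding equiv_def sym_def trans_def by blast
qed

lemma class_ne: "A \<in> tens_car X S \<Longrightarrow> \<exists>a. a \<in> A"
  unfolding tens_car_def quotient_def tens_eq_def by blast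

lemma chain_bound:
  assumes phiS: "\<forall>p\<in>M0. \<phi> (S p) = p" and U: "\<forall>x\<in>X. \<phi> x \<in> U0"
    and sh: "\<forall>x\<in>X. \<forall>y\<in>X. taxicab (\<phi> x) (\<phi> y) \<le> d x y"
    and pq: "\<forall>i<n. p i \<in> Nset \<times> X \<and> q i \<in> Nset \<times> X"
    and ch: "\<forall>i. Suc i < n \<longrightarrow> (q i, p (Suc i)) \<in> tens_eq S"
  shows "k < n \<Longrightarrow> taxicab (pos \<phi> (p 0)) (pos \<phi> (q k)) \<le> (\<Sum>i<Suc k. base_dist d (p i) (q i))"
proof (induction k)
  case 0
  then show ?case using base_bound[OF _ _ U sh] pq by simp
next
  case (Suc k)
  have e: "pos \<phi> (q k) = pos \<phi> (p (Suc k))"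
    using pos_inv[of \<phi> S, OF phiS] ch Suc.prems by blast
  have b: "taxicab (pos \<phi> (p (Suc k))) (pos \<phi> (q (Suc k))) \<le> base_dist d (p (Suc k)) (q (Suc k))"
    using base_bound[OF _ _ U sh] pq Suc.prems by blast
  have t: "taxicab (pos \<phi> (p 0)) (pos \<phi> (q (Suc k)))
      \<le> taxicab (pos \<phi> (p 0)) (pos \<phi> (q k)) + taxicab (pos \<phi> (q k)) (pos \<phi> (q (Suc k)))"
    by (rule taxi_tri)
  have ih: "taxicab (pos \<phi> (p 0)) (pos \<phi> (q k)) \<le> (\<Sum>i<Suc k. base_dist d (p i) (q i))"
    using Suc by simp
  show ?case using t ih b e by simp
qed

lemma tens_dist_lower:
  assumes SX: "S ` M0 \<subseteq> X" and phiS: "\<forall>p\<in>M0. \<phi> (S p) = p" and U: "\<forall>x\<in>X. \<phi> x \<in> U0"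
    and sh: "\<forall>x\<in>X. \<forall>y\<in>X. taxicab (\<phi> x) (\<phi> y) \<le> d x y"
    and AB: "A \<in> tens_car X S" "B \<in> tens_car X S" "a \<in> A" "b \<in> B"
  shows "taxicab (pos \<phi> a) (pos \<phi> b) \<le> tens_dist X d S A B"
  unfolding tens_dist_def
proof (rule cInf_greatest)
  have "a \<in> Nset \<times> X" "b \<in> Nset \<times> X" using in_tens_car_sub[OF SX] AB by blast+
  then show "{(\<Sum>i<n. base_dist d (p i) (q i)) | n p q.
       0 < n \<and> (\<forall>i<n. p i \<in> Nset \<times> X \<and> q i \<in> Nset \<times> X) \<and>
       p 0 \<in> A \<and> q (n - 1) \<in> B \<and>
       (\<forall>i. Suc i < n \<longrightarrow> (q i, p (Suc i)) \<in> tens_eq S)} \<noteq> {}"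
    using AB apply auto
    apply (rule exI[of _ 1], rule exI[of _ "\<lambda>_. a"], rule exI[of _ "\<lambda>_. b"])
    by auto
next
  fix x assume "x \<in> {(\<Sum>i<n. base_dist d (p i) (q i)) | n p q.
       0 < n \<and> (\<forall>i<n. p i \<in> Nset \<times> X \<and> q i \<in> Nset \<times> X) \<and>
       p 0 \<in> A \<and> q (n - 1) \<in> B \<and>
       (\<forall>i. Suc i < n \<longrightarrow> (q i, p (Suc i)) \<in> tens_eq S)}"
  then obtain n p q where x: "x = (\<Sum>i<n. base_dist d (p i) (q i))" "0 < n"
    "\<forall>i<n. p i \<in> Nset \<times> X \<and> q i \<in> Nset \<times> X" "p 0 \<in> A" "q (n - 1) \<in> B"
    "\<forall>i. Suc i < n \<longrightarrow> (q i, p (Suc i)) \<in> tens_eq S" by blast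
  have "pos \<phi> a = pos \<phi> (p 0)"
    using pos_inv[of \<phi> S, OF phiS] same_class[OF AB(1) AB(3) x(4)] by blast
  moreover have "pos \<phi> b = pos \<phi> (q (n - 1))"
    using pos_inv[of \<phi> S, OF phiS] same_class[OF AB(2) AB(4) x(5)] by blast
  moreover have "Suc (n - 1) = n" using x(2) by simp
  ultimately show "taxicab (pos \<phi> a) (pos \<phi> b) \<le> x"
    using chain_bound[OF phiS U sh x(3) x(6), of "n - 1"] x(1,2) by simp
qed

lemma tens_dist_mono:
  assumes le: "\<forall>x\<in>X. \<forall>y\<in>X. d x y \<le> d' x y" and nn: "\<forall>x\<in>X. \<forall>y\<in>X. 0 \<le> d x y"
    and SX: "S ` M0 \<subseteq> X" and AB: "A \<in> tens_car X S" "B \<in> tens_car X S"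
  shows "tens_dist X d S A B \<le> tens_dist X d' S A B"
  unfolding tens_dist_def
proof (rule cInf_greatest)
  obtain a b where ab: "a \<in> A" "b \<in> B" using class_ne[OF AB(1)] class_ne[OF AB(2)] by blast
  have "a \<in> Nset \<times> X" "b \<in> Nset \<times> X" using in_tens_car_sub[OF SX] AB ab by blast+
  then show "{(\<Sum>i<n. base_dist d' (p i) (q i)) | n p q.
       0 < n \<and> (\<forall>i<n. p i \<in> Nset \<times> X \<and> q i \<in> Nset \<times> X) \<and>
       p 0 \<in> A \<and> q (n - 1) \<in> B \<and>
       (\<forall>i. Suc i < n \<longrightarrow> (q i, p (Suc i)) \<in> tens_eq S)} \<noteq> {}"
    using ab apply auto
    apply (rule exI[of _ 1], rule exI[of _ "\<lambda>_. a"], rule exI[of _ "\<lambda>_. b"])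
    by auto
next
  fix x assume "x \<in> {(\<Sum>i<n. base_dist d' (p i) (q i)) | n p q.
       0 < n \<and> (\<forall>i<n. p i \<in> Nset \<times> X \<and> q i \<in> Nset \<times> X) \<and>
       p 0 \<in> A \<and> q (n - 1) \<in> B \<and>
       (\<forall>i. Suc i < n \<longrightarrow> (q i, p (Suc i)) \<in> tens_eq S)}"
  then obtain n p q where x: "x = (\<Sum>i<n. base_dist d' (p i) (q i))" "0 < n"
    "\<forall>i<n. p i \<in> Nset \<times> X \<and> q i \<in> Nset \<times> X" "p 0 \<in> A" "q (n - 1) \<in> B"
    "\<forall>i. Suc i < n \<longrightarrow> (q i, p (Suc i)) \<in> tens_eq S" by blast
  let ?T = "{(\<Sum>i<n. base_dist d (p i) (q i)) | n p q.
       0 < n \<and> (\<forall>i<n. p i \<in> Nset \<times> X \<and> q i \<in> Nset \<times> X) \<and>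
       p 0 \<in> A \<and> q (n - 1) \<in> B \<and>
       (\<forall>i. Suc i < n \<longrightarrow> (q i, p (Suc i)) \<in> tens_eq S)}"
  have bdd: "bdd_below ?T"
  proof (rule bdd_belowI)
    fix t assume "t \<in> ?T"
    then obtain n' p' q' where "t = (\<Sum>i<(n'::nat). base_dist d (p' i) (q' i))"
      "\<forall>i<n'. p' i \<in> Nset \<times> X \<and> q' i \<in> Nset \<times> X" unfolding mem_Collect_eq by blast
    then show "0 \<le> t" using nn unfolding base_dist_def
      by (auto intro!: sum_nonneg simp: mem_Times_iff)
  qed
  have mem: "(\<Sum>i<n. base_dist d (p i) (q i)) \<in> ?T" using x by blast
  have "(\<Sum>i<n. base_dist d (p i) (q i)) \<le> x"
    unfolding x(1) using x(3) le
    by (intro sum_mono) (auto simp: base_dist_def mem_Times_iff divide_right_mono)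
  then show "Inf ?T \<le> x" using cInf_lower[OF mem bdd] by linarith
qed

lemma exists_inj_U0:
  fixes S :: "real \<times> real \<Rightarrow> 'a"
  assumes "inj_on S M0"
  shows "\<exists>j :: real \<times> real \<Rightarrow> 'a. inj_on j U0"
proof -
  have inf: "infinite (UNIV :: real set)" by (rule infinite_UNIV_char_0)
  have 1: "U0 \<lesssim> (UNIV :: real set) \<times> (UNIV :: real set)"
    by (rule subset_imp_lepoll) simp
  have 2: "(UNIV :: real set) \<times> (UNIV :: real set) \<approx> (UNIV :: real set)"
    using card_of_Times_same_infinite[OF inf] eqpoll_iff_card_of_ordIso by blast
  have 3: "(UNIV :: real set) \<approx> {0..1::real}"
    using closed_interval_eqpoll_reals[of 0 1] eqpoll_sym by auto
  have 4: "{0..1::real} \<lesssim> M0"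
    unfolding lepoll_def
    by (rule exI[of _ "\<lambda>r. (r, 0)"]) (auto simp: inj_on_def M0_def)
  have 5: "M0 \<lesssim> (UNIV :: 'a set)"
    unfolding lepoll_def using assms by blast
  have "U0 \<lesssim> (UNIV :: 'a set)"
    by (meson 1 2 3 4 5 eqpoll_imp_lepoll lepoll_trans)
  then show ?thesis unfolding lepoll_def by blast
qed

lemma cell_exists:
  fixes r :: real assumes "0 \<le> r" "r \<le> 1"
  shows "\<exists>k::nat. k \<in> {0,1,2} \<and> real k / 3 \<le> r \<and> r \<le> (real k + 1) / 3"
proof -
  consider "r \<le> 1/3" | "1/3 \<le> r \<and> r \<le> 2/3" | "2/3 \<le> r" by linarith
  then show ?thesis
  proof cases
    case 1 then show ?thesis using assms by (intro exI[of _ 0]) auto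
  next
    case 2 then show ?thesis using assms by (intro exI[of _ 1]) auto
  next
    case 3 then show ?thesis using assms by (intro exI[of _ 2]) auto
  qed
qed

lemma tens_S_rep:
  assumes p: "p \<in> U0"
  shows "\<exists>n q. n \<in> Nset \<and> q \<in> U0 \<and> tens_S T p = tens_eq T `` {(n, T q)} \<and>
     real (fst n) + fst q = 3 * fst p \<and> real (snd n) + snd q = 3 * snd p"
proof -
  let ?P = "\<lambda>n. n \<in> Nset \<and>
                      real (fst n) / 3 \<le> fst p \<and> fst p \<le> (real (fst n) + 1) / 3 \<and>
                      real (snd n) / 3 \<le> snd p \<and> snd p \<le> (real (snd n) + 1) / 3"
  obtain k1 where k1: "k1 \<in> {0,1,2}" "real k1 / 3 \<le> fst p" "fst p \<le> (real k1 + 1) / 3"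
    using cell_exists[of "fst p"] p unfolding U0_def by (auto simp: mem_Times_iff)
  obtain k2 where k2: "k2 \<in> {0,1,2}" "real k2 / 3 \<le> snd p" "snd p \<le> (real k2 + 1) / 3"
    using cell_exists[of "snd p"] p unfolding U0_def by (auto simp: mem_Times_iff)
  have "?P (k1, k2)" using k1 k2 unfolding Nset_def by auto
  then have Pn: "?P (SOME n. ?P n)" by (rule someI)
  define n where "n = (SOME n. ?P n)"
  define q where "q = (3 * fst p - real (fst n), 3 * snd p - real (snd n))"
  have "q \<in> U0" using Pn unfolding n_def[symmetric] q_def U0_def by auto
  moreover have "tens_S T p = tens_eq T `` {(n, T q)}"
    unfolding tens_S_def n_def q_def Let_def by simp
  moreover have "real (fst n) + fst q = 3 * fst p" "real (snd n) + snd q = 3 * snd p"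
    unfolding q_def by auto
  moreover have "n \<in> Nset" using Pn unfolding n_def[symmetric] by blast
  ultimately show ?thesis by blast
qed

lemma U0_copy_alg:
  fixes j :: "real \<times> real \<Rightarrow> 'a" and jinv :: "'a \<Rightarrow> real \<times> real"
  assumes inj: "inj_on j U0" and ji: "\<forall>q\<in>U0. jinv (j q) = q"
  shows "is_alg (j ` U0) (\<lambda>x y. taxicab (jinv x) (jinv y)) j
           (\<lambda>B. j (pos jinv (SOME z. z \<in> B)))"
proof -
  let ?Y = "j ` U0" and ?e = "\<lambda>x y. taxicab (jinv x) (jinv y)"
    and ?mu = "\<lambda>B. j (pos jinv (SOME z. z \<in> B))"
  have jY: "\<forall>x\<in>?Y. jinv x \<in> U0" using ji by auto
  have jM: "\<forall>p\<in>M0. jinv (j p) = p" using ji M0_U0 by auto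
  have jM0: "j ` M0 \<subseteq> ?Y" using M0_U0 by auto
  have met: "metric_on ?Y ?e"
    unfolding metric_on_def
  proof (intro conjI ballI)
    fix x y z assume "x \<in> ?Y" "y \<in> ?Y"
    then obtain a b where ab: "a \<in> U0" "b \<in> U0" "x = j a" "y = j b" by auto
    show "0 \<le> ?e x y" by (rule taxi_nonneg)
    show "?e x y = ?e y x" by (rule taxi_sym)
    show "(?e x y = 0) = (x = y)"
      using ab ji inj taxi_zero[of a b] by (auto simp: inj_on_def)
    assume "z \<in> ?Y"
    show "?e x z \<le> ?e x y + ?e y z" by (rule taxi_tri)
  qed
  have sq: "square_ms ?Y ?e j"
    unfolding square_ms_def
  proof (intro conjI)
    show "\<forall>x\<in>?Y. \<forall>y\<in>?Y. ?e x y \<le> 2" using jY taxi_le2 by blast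
    show "j ` M0 \<subseteq> ?Y" using M0_U0 by auto
    show "inj_on j M0" using inj M0_U0 inj_on_subset by blast
    show "\<forall>i\<in>{0, 1}. \<forall>r\<in>{0..1}. \<forall>s\<in>{0..1}.
        ?e (j (i, r)) (j (i, s)) = \<bar>s - r\<bar> \<and> ?e (j (r, i)) (j (s, i)) = \<bar>s - r\<bar>"
    proof (intro ballI)
      fix i r s :: real assume "i \<in> {0,1}" "r \<in> {0..1}" "s \<in> {0..1}"
      then have "(i, r) \<in> U0" "(i, s) \<in> U0" "(r, i) \<in> U0" "(s, i) \<in> U0" unfolding U0_def by auto
      then show "?e (j (i, r)) (j (i, s)) = \<bar>s - r\<bar> \<and> ?e (j (r, i)) (j (s, i)) = \<bar>s - r\<bar>"
        using ji unfolding taxicab_def by auto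
    qed
    show "\<forall>p\<in>M0. \<forall>q\<in>M0. \<bar>fst p - fst q\<bar> + \<bar>snd p - snd q\<bar> \<le> ?e (j p) (j q)"
      using jM unfolding taxicab_def by auto
  qed (rule met)
  have hom: "sq_hom (tens_car ?Y j) (tens_dist ?Y ?e j) (tens_S j) ?Y ?e j ?mu"
    unfolding sq_hom_def
  proof (intro conjI ballI subsetI)
    fix y assume "y \<in> ?mu ` tens_car ?Y j"
    then obtain A where A: "A \<in> tens_car ?Y j" "y = ?mu A" by auto
    have "(SOME z. z \<in> A) \<in> A" using class_ne[OF A(1)] by (metis someI)
    then have "(SOME z. z \<in> A) \<in> Nset \<times> ?Y"
      using in_tens_car_sub[OF jM0 A(1)] by blast
    then have "pos jinv (SOME z. z \<in> A) \<in> U0" by (rule pos_U0[OF _ jY])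
    then show "y \<in> ?Y" using A by simp
  next
    fix A B assume AB: "A \<in> tens_car ?Y j" "B \<in> tens_car ?Y j"
    have a: "(SOME z. z \<in> A) \<in> A" using class_ne[OF AB(1)] by (metis someI)
    have b: "(SOME z. z \<in> B) \<in> B" using class_ne[OF AB(2)] by (metis someI)
    have aU: "pos jinv (SOME z. z \<in> A) \<in> U0"
      using in_tens_car_sub[OF jM0 AB(1)] a by (intro pos_U0[OF _ jY]) blast
    have bU: "pos jinv (SOME z. z \<in> B) \<in> U0"
      using in_tens_car_sub[OF jM0 AB(2)] b by (intro pos_U0[OF _ jY]) blast
    have "taxicab (pos jinv (SOME z. z \<in> A)) (pos jinv (SOME z. z \<in> B)) \<le> tens_dist ?Y ?e j A B"
      by (rule tens_dist_lower[OF jM0 jM jY _ AB a b]) simp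
    then show "?e (?mu A) (?mu B) \<le> tens_dist ?Y ?e j A B"
      using ji aU bU by simp
  next
    fix p assume p: "p \<in> M0"
    then have "p \<in> U0" using M0_U0 by auto
    then obtain n q where nq: "n \<in> Nset" "q \<in> U0" "tens_S j p = tens_eq j `` {(n, j q)}"
      "real (fst n) + fst q = 3 * fst p" "real (snd n) + snd q = 3 * snd p"
      using tens_S_rep by blast
    let ?z = "SOME z. z \<in> tens_eq j `` {(n, j q)}"
    have "(n, j q) \<in> tens_eq j `` {(n, j q)}" unfolding tens_eq_def by simp
    then have "?z \<in> tens_eq j `` {(n, j q)}" by (metis someI)
    then have "pos jinv ?z = pos jinv (n, j q)"
      using pos_inv[of jinv j, OF jM] by (metis Image_singleton_iff)
    also have "\<dots> = p"
    proof -
      have "jinv (j q) = q" using nq(2) ji by blast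
      then show ?thesis using nq(4,5) unfolding pos_def by (simp add: prod_eq_iff)
    qed
    finally show "?mu (tens_S j p) = j p" using nq(3) by simp
  qed
  show ?thesis unfolding is_alg_def using sq hom by blast
qed

lemma exists_h:
  fixes W :: "'a set" and d :: "'a \<Rightarrow> 'a \<Rightarrow> real" and S :: "real \<times> real \<Rightarrow> 'a"
    and lam :: "((nat \<times> nat) \<times> 'a) set \<Rightarrow> 'a"
  assumes ini: "initial_alg W d S lam"
  shows "\<exists>h. (\<forall>x\<in>W. h x \<in> U0) \<and> (\<forall>x\<in>W. \<forall>y\<in>W. taxicab (h x) (h y) \<le> d x y) \<and>
    (\<forall>p\<in>M0. h (S p) = p) \<and> (\<forall>A\<in>tens_car W S. \<forall>a\<in>A. h (lam A) = pos h a)"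
proof -
  have alg: "is_alg W d S lam" using ini unfolding initial_alg_def by blast
  then have sq: "square_ms W d S" unfolding is_alg_def by blast
  then have injS: "inj_on S M0" and SW: "S ` M0 \<subseteq> W" unfolding square_ms_def by blast+
  obtain j :: "real \<times> real \<Rightarrow> 'a" where inj: "inj_on j U0" using exists_inj_U0[OF injS] by blast
  define jinv where "jinv = the_inv_into U0 j"
  have ji: "\<forall>q\<in>U0. jinv (j q) = q" unfolding jinv_def using the_inv_into_f_f[OF inj] by blast
  have jY: "\<forall>x\<in>j ` U0. jinv x \<in> U0" using ji by auto
  have jM: "\<forall>p\<in>M0. jinv (j p) = p" using ji M0_U0 by auto
  have Yalg: "is_alg (j ` U0) (\<lambda>x y. taxicab (jinv x) (jinv y)) j (\<lambda>B. j (pos jinv (SOME z. z \<in> B)))"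
    by (rule U0_copy_alg[OF inj ji])
  then obtain g where g: "alg_hom W d S lam (j ` U0) (\<lambda>x y. taxicab (jinv x) (jinv y)) j
      (\<lambda>B. j (pos jinv (SOME z. z \<in> B))) g"
    using ini unfolding initial_alg_def by blast
  have gW: "\<forall>x\<in>W. g x \<in> j ` U0" and gsh: "\<forall>x\<in>W. \<forall>y\<in>W. taxicab (jinv (g x)) (jinv (g y)) \<le> d x y"
    and gS: "\<forall>p\<in>M0. g (S p) = j p"
    and glam: "\<forall>A\<in>tens_car W S. g (lam A) = j (pos jinv (SOME z. z \<in> tens_map j g A))"
    using g unfolding alg_hom_def sq_hom_def by auto
  define h where "h = (\<lambda>x. jinv (g x))"
  have h1: "\<forall>x\<in>W. h x \<in> U0" using gW jY unfolding h_def by blast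
  have h2: "\<forall>x\<in>W. \<forall>y\<in>W. taxicab (h x) (h y) \<le> d x y" using gsh unfolding h_def by blast
  have h3: "\<forall>p\<in>M0. h (S p) = p" using gS jM unfolding h_def by simp
  have h4: "\<forall>A\<in>tens_car W S. \<forall>a\<in>A. h (lam A) = pos h a"
  proof (intro ballI)
    fix A a assume A: "A \<in> tens_car W S" and a: "a \<in> A"
    define z0 where "z0 = (SOME z. z \<in> A)"
    have z0: "z0 \<in> A" unfolding z0_def using a by (metis someI)
    have aN: "a \<in> Nset \<times> W" using in_tens_car_sub[OF SW A] a by blast
    define z1 where "z1 = (SOME z. z \<in> tens_map j g A)"
    have tm: "tens_map j g A = tens_eq j `` {(fst z0, g (snd z0))}"
      unfolding tens_map_def z0_def Let_def by simp
    have "(fst z0, g (snd z0)) \<in> tens_eq j `` {(fst z0, g (snd z0))}"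
      unfolding tens_eq_def by simp
    then have "z1 \<in> tens_eq j `` {(fst z0, g (snd z0))}" unfolding z1_def tm by (metis someI)
    then have "((fst z0, g (snd z0)), z1) \<in> tens_eq j" by simp
    then have "pos jinv z1 = pos jinv (fst z0, g (snd z0))"
      using pos_inv[of jinv j, OF jM] by metis
    also have "\<dots> = pos h z0" unfolding pos_def h_def by simp
    also have "\<dots> = pos h a" using pos_inv[of h S, OF h3] same_class[OF A z0 a] by blast
    finally have e: "pos jinv z1 = pos h a" .
    have "pos h a \<in> U0" using aN by (rule pos_U0[OF _ h1])
    then have "jinv (j (pos jinv z1)) = pos h a" using e ji by simp
    then show "h (lam A) = pos h a" unfolding h_def using glam A z1_def by simp
  qed
  show ?thesis using h1 h2 h3 h4 by blast
qed

lemma tens_map_id: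
  assumes "A \<in> tens_car X S" shows "tens_map S (\<lambda>x. x) A = A"
proof -
  from assms obtain x where x: "A = tens_eq S `` {x}"
    unfolding tens_car_def quotient_def by auto
  have z: "(SOME z. z \<in> A) \<in> A" using class_ne[OF assms] by (metis someI)
  then have "(x, SOME z. z \<in> A) \<in> tens_eq S" using x by simp
  then have "tens_eq S `` {x} = tens_eq S `` {SOME z. z \<in> A}"
    using equiv_class_eq[OF equiv_tens_eq] by blast
  have "tens_map S (\<lambda>x. x) A = tens_eq S `` {SOME z. z \<in> A}"
    unfolding tens_map_def Let_def by simp
  also have "\<dots> = tens_eq S `` {x}" using \<open>tens_eq S `` {x} = _\<close> by (rule sym)
  also have "\<dots> = A" using x by (rule sym)
  finally show ?thesis .
qed

lemma tens_dist_le_chain: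
  assumes nn: "\<forall>x\<in>X. \<forall>y\<in>X. 0 \<le> d x y" and n: "0 < n"
    and pq: "\<forall>i<n. p i \<in> Nset \<times> X \<and> q i \<in> Nset \<times> X"
    and A: "p 0 \<in> A" and B: "q (n - 1) \<in> B"
    and ch: "\<forall>i. Suc i < n \<longrightarrow> (q i, p (Suc i)) \<in> tens_eq S"
  shows "tens_dist X d S A B \<le> (\<Sum>i<n. base_dist d (p i) (q i))"
  unfolding tens_dist_def
proof (rule cInf_lower)
  show "(\<Sum>i<n. base_dist d (p i) (q i)) \<in> {(\<Sum>i<n. base_dist d (p i) (q i)) | n p q.
       0 < n \<and> (\<forall>i<n. p i \<in> Nset \<times> X \<and> q i \<in> Nset \<times> X) \<and>
       p 0 \<in> A \<and> q (n - 1) \<in> B \<and>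
       (\<forall>i. Suc i < n \<longrightarrow> (q i, p (Suc i)) \<in> tens_eq S)}"
    using assms by blast
  show "bdd_below {(\<Sum>i<n. base_dist d (p i) (q i)) | n p q.
       0 < n \<and> (\<forall>i<n. p i \<in> Nset \<times> X \<and> q i \<in> Nset \<times> X) \<and>
       p 0 \<in> A \<and> q (n - 1) \<in> B \<and>
       (\<forall>i. Suc i < n \<longrightarrow> (q i, p (Suc i)) \<in> tens_eq S)}"
  proof (rule bdd_belowI)
    fix t assume "t \<in> {(\<Sum>i<n. base_dist d (p i) (q i)) | n p q.
       0 < n \<and> (\<forall>i<n. p i \<in> Nset \<times> X \<and> q i \<in> Nset \<times> X) \<and>
       p 0 \<in> A \<and> q (n - 1) \<in> B \<and>
       (\<forall>i. Suc i < n \<longrightarrow> (q i, p (Suc i)) \<in> tens_eq S)}"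
    then obtain n' p' q' where "t = (\<Sum>i<(n'::nat). base_dist d (p' i) (q' i))"
      "\<forall>i<n'. p' i \<in> Nset \<times> X \<and> q' i \<in> Nset \<times> X" unfolding mem_Collect_eq by blast
    then show "0 \<le> t" using nn unfolding base_dist_def
      by (auto intro!: sum_nonneg simp: mem_Times_iff)
  qed
qed

lemma glue:
  assumes n: "n \<in> Nset" "n' \<in> Nset" and u: "u \<in> M0" "u' \<in> M0"
    and e1: "real (fst n) + fst u = real (fst n') + fst u'"
    and e2: "real (snd n) + snd u = real (snd n') + snd u'"
  shows "((n, S u), (n', S u')) \<in> tens_eq S"
proof -
  have gr: "((m, S v), (m', S v')) \<in> tens_eq S"
    if "m \<in> Nset" "m' \<in> Nset" "adjN m m'" "v \<in> M0" "v' \<in> M0"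
       "real (fst m) + fst v = real (fst m') + fst v'"
       "real (snd m) + snd v = real (snd m') + snd v'" for m m' v v'
  proof -
    have "((m, S v), (m', S v')) \<in> gen_rel S" unfolding gen_rel_def using that by blast
    then show ?thesis unfolding tens_eq_def by blast
  qed
  have uU: "0 \<le> fst u" "fst u \<le> 1" "0 \<le> snd u" "snd u \<le> 1"
     "0 \<le> fst u'" "fst u' \<le> 1" "0 \<le> snd u'" "snd u' \<le> 1"
    using u unfolding M0_def by auto
  obtain a b a' b' where nn: "n = (a, b)" "n' = (a', b')" by (cases n, cases n') auto
  have ab: "a \<le> 2" "b \<le> 2" "a' \<le> 2" "b' \<le> 2" using n unfolding nn Nset_def by auto
  have "real a \<le> real a' + 1" "real a' \<le> real a + 1" "real b \<le> real b' + 1" "real b' \<le> real b + 1"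
    using e1 e2 uU unfolding nn by auto
  then have d1: "a \<le> a' + 1" "a' \<le> a + 1" "b \<le> b' + 1" "b' \<le> b + 1" by linarith+
  show ?thesis
  proof (cases "a = a'")
    case True
    show ?thesis
    proof (cases "b = b'")
      case True
      then have "u = u'" using e1 e2 \<open>a = a'\<close> unfolding nn by (auto simp: prod_eq_iff)
      then show ?thesis using True \<open>a = a'\<close> nn unfolding tens_eq_def by simp
    next
      case False
      then have "adjN n n'" using True d1 unfolding nn adjN_def by auto
      then show ?thesis using gr n u e1 e2 by blast
    qed
  next
    case False
    show ?thesis
    proof (cases "b = b'")
      case True
      then have "adjN n n'" using False d1 unfolding nn adjN_def by auto
      then show ?thesis using gr n u e1 e2 by blast
    next
      case False2: False
      define m where "m = (a', b)"
      define v where "v = (fst u', snd u)"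
      have fu': "fst u' \<in> {0, 1}"
      proof -
        have "a' = a + 1 \<or> a = a' + 1" using False d1 by auto
        then show ?thesis using e1 uU unfolding nn by auto
      qed
      have su: "snd u \<in> {0, 1}"
      proof -
        have "b' = b + 1 \<or> b = b' + 1" using False2 d1 by auto
        then show ?thesis using e2 uU unfolding nn by auto
      qed
      have mN: "m \<in> Nset" using n unfolding m_def nn Nset_def by auto
      have vM: "v \<in> M0" using fu' su uU unfolding v_def M0_def by auto
      have "((n, S u), (m, S v)) \<in> tens_eq S"
        apply (rule gr[OF n(1) mN _ u(1) vM])
        using False d1 e1 unfolding m_def v_def nn adjN_def by auto
      moreover have "((m, S v), (n', S u')) \<in> tens_eq S"
        apply (rule gr[OF mN n(2) _ vM u(2)])
        using False2 d1 e2 unfolding m_def v_def nn adjN_def by auto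
      ultimately show ?thesis unfolding tens_eq_def by (meson rtrancl_trans)
    qed
  qed
qed

definition incell :: "nat \<times> nat \<Rightarrow> real \<times> real \<Rightarrow> bool" where
  "incell n P \<longleftrightarrow> n \<in> Nset \<and>
     real (fst n) / 3 \<le> fst P \<and> fst P \<le> (real (fst n) + 1) / 3 \<and>
     real (snd n) / 3 \<le> snd P \<and> snd P \<le> (real (snd n) + 1) / 3"

definition loc :: "nat \<times> nat \<Rightarrow> real \<times> real \<Rightarrow> real \<times> real" where
  "loc n P = (3 * fst P - real (fst n), 3 * snd P - real (snd n))"

lemma tens_S_alt: "tens_S S P = tens_eq S `` {(SOME n. incell n P, S (loc (SOME n. incell n P) P))}"
  unfolding tens_S_def incell_def loc_def Let_def by simp

lemma incell_exists: "P \<in> U0 \<Longrightarrow> \<exists>n. incell n P"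
proof -
  assume P: "P \<in> U0"
  obtain k1 where k1: "k1 \<in> {0,1,2}" "real k1 / 3 \<le> fst P" "fst P \<le> (real k1 + 1) / 3"
    using cell_exists[of "fst P"] P unfolding U0_def by (auto simp: mem_Times_iff)
  obtain k2 where k2: "k2 \<in> {0,1,2}" "real k2 / 3 \<le> snd P" "snd P \<le> (real k2 + 1) / 3"
    using cell_exists[of "snd P"] P unfolding U0_def by (auto simp: mem_Times_iff)
  have "incell (k1, k2) P" using k1 k2 unfolding incell_def Nset_def by auto
  then show ?thesis by blast
qed

lemma incell_U0: "incell n P \<Longrightarrow> P \<in> U0"
  unfolding incell_def Nset_def U0_def by (cases P) auto

lemma incell_loc_U0: "incell n P \<Longrightarrow> loc n P \<in> U0"
  unfolding incell_def loc_def U0_def by auto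

lemma incell_bdry:
  assumes "incell n P" "incell n' P" "n \<noteq> n'"
  shows "loc n P \<in> M0"
proof -
  obtain a b a' b' where nn: "n = (a, b)" "n' = (a', b')" by (cases n, cases n') auto
  have c: "real a \<le> 3 * fst P" "3 * fst P \<le> real a + 1" "real b \<le> 3 * snd P" "3 * snd P \<le> real b + 1"
     "real a' \<le> 3 * fst P" "3 * fst P \<le> real a' + 1" "real b' \<le> 3 * snd P" "3 * snd P \<le> real b' + 1"
    using assms(1,2) unfolding incell_def nn by auto
  have "a \<noteq> a' \<or> b \<noteq> b'" using assms(3) nn by auto
  then have "3 * fst P - real a \<in> {0, 1} \<or> 3 * snd P - real b \<in> {0, 1}"
  proof
    assume "a \<noteq> a'"
    then have "a' \<ge> a + 1 \<or> a \<ge> a' + 1" by auto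
    then have "real a' \<ge> real a + 1 \<or> real a \<ge> real a' + 1" by linarith
    then have "3 * fst P - real a = 1 \<or> 3 * fst P - real a = 0" using c by linarith
    then show ?thesis by auto
  next
    assume "b \<noteq> b'"
    then have "b' \<ge> b + 1 \<or> b \<ge> b' + 1" by auto
    then have "real b' \<ge> real b + 1 \<or> real b \<ge> real b' + 1" by linarith
    then have "3 * snd P - real b = 1 \<or> 3 * snd P - real b = 0" using c by linarith
    then show ?thesis by auto
  qed
  then show ?thesis using incell_loc_U0[OF assms(1)] unfolding M0_def U0_def loc_def nn by auto
qed

lemma tens_S_cell:
  assumes "incell n P" "loc n P \<in> M0"
  shows "tens_S S P = tens_eq S `` {(n, S (loc n P))}"
proof -
  define n0 where "n0 = (SOME n. incell n P)"
  have n0: "incell n0 P" unfolding n0_def using assms(1) by (rule someI)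
  have l0: "loc n0 P \<in> M0"
    using assms(2) incell_bdry[OF n0 assms(1)] by (cases "n0 = n") auto
  have "((n0, S (loc n0 P)), (n, S (loc n P))) \<in> tens_eq S"
    apply (rule glue)
    using n0 assms l0 unfolding incell_def loc_def by auto
  then have "tens_eq S `` {(n0, S (loc n0 P))} = tens_eq S `` {(n, S (loc n P))}"
    using equiv_class_eq[OF equiv_tens_eq] by blast
  then show ?thesis unfolding tens_S_alt n0_def by simp
qed

definition cls :: "(real \<times> real \<Rightarrow> 'a) \<Rightarrow> nat \<times> nat \<Rightarrow> 'a \<Rightarrow> ((nat \<times> nat) \<times> 'a) set" where
  "cls S m x = tens_eq S `` {(m, x)}"

lemma grid_approx:
  fixes t :: real assumes "0 \<le> t" "t \<le> 1"
  shows "\<exists>i::nat. i \<le> 3 ^ k \<and> \<bar>t - real i / 3 ^ k\<bar> \<le> 1 / 3 ^ k"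
proof -
  define i where "i = nat \<lfloor>t * 3 ^ k\<rfloor>"
  have f0: "0 \<le> \<lfloor>t * 3 ^ k\<rfloor>" using assms by simp
  have ri: "real i = of_int \<lfloor>t * 3 ^ k\<rfloor>" unfolding i_def using f0 by simp
  have a: "real i \<le> t * 3 ^ k" "t * 3 ^ k < real i + 1" using ri by linarith+
  have "t * 3 ^ k \<le> 3 ^ k" using assms by simp
  then have "real i \<le> 3 ^ k" using a by linarith
  then have "i \<le> 3 ^ k" by (metis of_nat_le_iff of_nat_numeral of_nat_power)
  moreover have "\<bar>t - real i / 3 ^ k\<bar> \<le> 1 / 3 ^ k"
  proof -
    have p: "(0::real) < 3 ^ k" by simp
    have "real i / 3 ^ k \<le> t" using a p by (simp add: divide_le_eq)
    moreover have "t - real i / 3 ^ k \<le> 1 / 3 ^ k"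
    proof -
      have "t * 3 ^ k - real i \<le> 1" using a by linarith
      then have "(t * 3 ^ k - real i) / 3 ^ k \<le> 1 / 3 ^ k" using p by (simp add: divide_right_mono)
      then show ?thesis using p by (simp add: diff_divide_distrib)
    qed
    ultimately show ?thesis by linarith
  qed
  ultimately show ?thesis by blast
qed

lemma le_eps3:
  fixes a b :: real
  assumes "\<forall>k::nat. a \<le> b + 2 / 3 ^ k"
  shows "a \<le> b"
proof (rule ccontr)
  assume "\<not> a \<le> b"
  then have e: "0 < (a - b) / 2" by simp
  obtain k where k: "(1/3::real) ^ k < (a - b) / 2" using real_arch_pow_inv[OF e, of "1/3"] by auto
  have "2 / 3 ^ k = 2 * (1/3::real) ^ k" by (simp add: power_divide)
  then have "2 / 3 ^ k < a - b" using k by simp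
  then show False using assms by (metis add.commute less_diff_eq not_le)
qed

definition G1 :: "real set" where "G1 = {0, 1/3, 2/3, 1}"

definition isgrid :: "real \<times> real \<Rightarrow> bool" where
  "isgrid P \<longleftrightarrow> P \<in> U0 \<and> (fst P \<in> G1 \<or> snd P \<in> G1)"

lemma G1_cell:
  assumes "x \<in> G1" "n \<in> {0,1,2::nat}" "real n / 3 \<le> x" "x \<le> (real n + 1) / 3"
  shows "3 * x - real n \<in> {0, 1}"
  using assms unfolding G1_def by auto

lemma grid_loc:
  assumes "isgrid P" "incell n P" shows "loc n P \<in> M0"
proof -
  obtain a b where nn: "n = (a, b)" by (cases n)
  have c: "a \<in> {0,1,2}" "b \<in> {0,1,2}" "real a / 3 \<le> fst P" "fst P \<le> (real a + 1) / 3"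
    "real b / 3 \<le> snd P" "snd P \<le> (real b + 1) / 3"
    using assms(2) unfolding incell_def nn Nset_def by auto
  have "3 * fst P - real a \<in> {0, 1} \<or> 3 * snd P - real b \<in> {0, 1}"
    using assms(1) G1_cell c unfolding isgrid_def by blast
  then show ?thesis using incell_loc_U0[OF assms(2)] unfolding M0_def U0_def loc_def nn by auto
qed

lemma G1_U0: "x \<in> G1 \<Longrightarrow> 0 \<le> x \<and> x \<le> 1" unfolding G1_def by auto

definition clampr :: "real \<Rightarrow> real \<Rightarrow> real \<Rightarrow> real" where
  "clampr v lo hi = max lo (min hi v)"

definition Cl :: "nat \<times> nat \<Rightarrow> real \<times> real \<Rightarrow> real \<times> real" where
  "Cl n Z = (clampr (fst Z) (real (fst n) / 3) ((real (fst n) + 1) / 3),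
            clampr (snd Z) (real (snd n) / 3) ((real (snd n) + 1) / 3))"

lemma clamp_bounds: "lo \<le> hi \<Longrightarrow> lo \<le> clampr v lo hi \<and> clampr v lo hi \<le> hi"
  unfolding clampr_def by auto

lemma clamp_out: "lo \<le> hi \<Longrightarrow> \<not> (lo \<le> v \<and> v \<le> hi) \<Longrightarrow> clampr v lo hi = lo \<or> clampr v lo hi = hi"
  unfolding clampr_def by auto

lemma clamp_between: "lo \<le> u \<Longrightarrow> u \<le> hi \<Longrightarrow> \<bar>u - clampr v lo hi\<bar> + \<bar>clampr v lo hi - v\<bar> = \<bar>u - v\<bar>"
  unfolding clampr_def by (auto simp: max_def min_def abs_if)

lemma C_incell: "n \<in> Nset \<Longrightarrow> incell n (Cl n Z)"
proof -
  assume n: "n \<in> Nset"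
  have b1: "real (fst n) / 3 \<le> clampr (fst Z) (real (fst n) / 3) ((real (fst n) + 1) / 3) \<and>
    clampr (fst Z) (real (fst n) / 3) ((real (fst n) + 1) / 3) \<le> (real (fst n) + 1) / 3"
    by (rule clamp_bounds) simp
  have b2: "real (snd n) / 3 \<le> clampr (snd Z) (real (snd n) / 3) ((real (snd n) + 1) / 3) \<and>
    clampr (snd Z) (real (snd n) / 3) ((real (snd n) + 1) / 3) \<le> (real (snd n) + 1) / 3"
    by (rule clamp_bounds) simp
  show ?thesis unfolding incell_def Cl_def prod.sel using n b1 b2 by blast
qed

lemma C_id: "incell n Z \<Longrightarrow> Cl n Z = Z"
  unfolding incell_def Cl_def clampr_def by (auto simp: prod_eq_iff)

lemma C_bdry: assumes "n \<in> Nset" "\<not> incell n Z" shows "loc n (Cl n Z) \<in> M0"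
proof -
  obtain a b where nn: "n = (a, b)" by (cases n)
  have r: "real a \<le> 2" "real b \<le> 2" using assms(1) unfolding nn Nset_def by auto
  have "\<not> (real a / 3 \<le> fst Z \<and> fst Z \<le> (real a + 1) / 3) \<or> \<not> (real b / 3 \<le> snd Z \<and> snd Z \<le> (real b + 1) / 3)"
    using assms unfolding incell_def nn by auto
  then have "3 * fst (Cl n Z) - real a \<in> {0,1} \<or> 3 * snd (Cl n Z) - real b \<in> {0,1}"
  proof
    assume "\<not> (real a / 3 \<le> fst Z \<and> fst Z \<le> (real a + 1) / 3)"
    then have "fst (Cl n Z) = real a / 3 \<or> fst (Cl n Z) = (real a + 1) / 3"
      unfolding Cl_def nn using clamp_out[of "real a / 3" "(real a + 1) / 3" "fst Z"] by simp
    then show ?thesis by auto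
  next
    assume "\<not> (real b / 3 \<le> snd Z \<and> snd Z \<le> (real b + 1) / 3)"
    then have "snd (Cl n Z) = real b / 3 \<or> snd (Cl n Z) = (real b + 1) / 3"
      unfolding Cl_def nn using clamp_out[of "real b / 3" "(real b + 1) / 3" "snd Z"] by simp
    then show ?thesis by auto
  qed
  moreover have "loc n (Cl n Z) \<in> U0" using incell_loc_U0[OF C_incell[OF assms(1)]] .
  ultimately show ?thesis unfolding M0_def U0_def loc_def nn by auto
qed

lemma C_between:
  assumes "incell n V" shows "taxicab V (Cl n Z) + taxicab (Cl n Z) Z = taxicab V Z"
proof -
  have "\<bar>fst V - fst (Cl n Z)\<bar> + \<bar>fst (Cl n Z) - fst Z\<bar> = \<bar>fst V - fst Z\<bar>"
    using assms unfolding incell_def Cl_def by (simp add: clamp_between)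
  moreover have "\<bar>snd V - snd (Cl n Z)\<bar> + \<bar>snd (Cl n Z) - snd Z\<bar> = \<bar>snd V - snd Z\<bar>"
    using assms unfolding incell_def Cl_def by (simp add: clamp_between)
  ultimately show ?thesis unfolding taxicab_def by linarith
qed

lemma loc_grid: assumes "incell n P" "loc n P \<in> M0" shows "isgrid P"
proof -
  obtain a b where nn: "n = (a, b)" by (cases n)
  have ab: "a \<in> {0,1,2}" "b \<in> {0,1,2}" using assms(1) unfolding incell_def nn Nset_def by auto
  have "3 * fst P - real a \<in> {0,1} \<or> 3 * snd P - real b \<in> {0,1}"
    using assms(2) incell_loc_U0[OF assms(1)] unfolding M0_def loc_def nn by auto
  then have "fst P \<in> G1 \<or> snd P \<in> G1" using ab unfolding G1_def by auto
  then show ?thesis using incell_U0[OF assms(1)] unfolding isgrid_def by blast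
qed

locale walg =
  fixes W :: "'a set" and d :: "'a \<Rightarrow> 'a \<Rightarrow> real" and S :: "real \<times> real \<Rightarrow> 'a"
    and lam :: "((nat \<times> nat) \<times> 'a) set \<Rightarrow> 'a" and h :: "'a \<Rightarrow> real \<times> real"
  assumes alg: "is_alg W d S lam"
    and h1: "\<forall>x\<in>W. h x \<in> U0" and h2: "\<forall>x\<in>W. \<forall>y\<in>W. taxicab (h x) (h y) \<le> d x y"
    and h3: "\<forall>p\<in>M0. h (S p) = p" and h4: "\<forall>A\<in>tens_car W S. \<forall>a\<in>A. h (lam A) = pos h a"
begin

lemma sq: "square_ms W d S" using alg unfolding is_alg_def by (elim conjE) assumption
lemma lhom: "sq_hom (tens_car W S) (tens_dist W d S) (tens_S S) W d S lam"
  using alg unfolding is_alg_def by (elim conjE) assumption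
lemma SW: "S ` M0 \<subseteq> W" using sq unfolding square_ms_def by (elim conjE) assumption
lemma SW': "p \<in> M0 \<Longrightarrow> S p \<in> W" using SW by blast
lemma met: "metric_on W d" using sq unfolding square_ms_def by (elim conjE) assumption
lemma nn: "\<forall>x\<in>W. \<forall>y\<in>W. 0 \<le> d x y" using met unfolding metric_on_def by blast
lemma dsym: "x \<in> W \<Longrightarrow> y \<in> W \<Longrightarrow> d x y = d y x" using met unfolding metric_on_def by blast
lemma dself: "x \<in> W \<Longrightarrow> d x x = 0" using met unfolding metric_on_def by blast
lemma dtri: "x \<in> W \<Longrightarrow> y \<in> W \<Longrightarrow> z \<in> W \<Longrightarrow> d x z \<le> d x y + d y z"
  using met unfolding metric_on_def by blast
lemma dle2all: "\<forall>x\<in>W. \<forall>y\<in>W. d x y \<le> 2" using sq unfolding square_ms_def by (elim conjE) assumption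
lemma dle2: "x \<in> W \<Longrightarrow> y \<in> W \<Longrightarrow> d x y \<le> 2" using dle2all by blast
lemma sq1all: "\<forall>i\<in>{0, 1}. \<forall>r\<in>{0..1}. \<forall>s\<in>{0..1}.
        d (S (i, r)) (S (i, s)) = \<bar>s - r\<bar> \<and> d (S (r, i)) (S (s, i)) = \<bar>s - r\<bar>"
  using sq unfolding square_ms_def by (elim conjE) assumption
lemma sq1a: "i \<in> {0,1} \<Longrightarrow> r \<in> {0..1} \<Longrightarrow> s \<in> {0..1} \<Longrightarrow> d (S (i, r)) (S (i, s)) = \<bar>s - r\<bar>"
  using sq1all by blast
lemma sq1b: "i \<in> {0,1} \<Longrightarrow> r \<in> {0..1} \<Longrightarrow> s \<in> {0..1} \<Longrightarrow> d (S (r, i)) (S (s, i)) = \<bar>s - r\<bar>"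
  using sq1all by blast
lemma lhom1: "lam ` tens_car W S \<subseteq> W" using lhom unfolding sq_hom_def by (elim conjE) assumption
lemma lhom2: "\<forall>x\<in>tens_car W S. \<forall>y\<in>tens_car W S. d (lam x) (lam y) \<le> tens_dist W d S x y"
  using lhom unfolding sq_hom_def by (elim conjE) assumption
lemma lhom3: "\<forall>p\<in>M0. lam (tens_S S p) = S p"
  using lhom unfolding sq_hom_def by (elim conjE) assumption
lemma lamW: "A \<in> tens_car W S \<Longrightarrow> lam A \<in> W" using lhom1 by blast
lemma lam_short: "A \<in> tens_car W S \<Longrightarrow> B \<in> tens_car W S \<Longrightarrow> d (lam A) (lam B) \<le> tens_dist W d S A B"
  using lhom2 by blast
lemma lamS: "p \<in> M0 \<Longrightarrow> lam (tens_S S p) = S p" using lhom3 by blast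

lemma cls_car: "m \<in> Nset \<Longrightarrow> x \<in> W \<Longrightarrow> cls S m x \<in> tens_car W S"
  unfolding cls_def tens_car_def by (rule quotientI) auto

lemma cls_mem: "(m, x) \<in> cls S m x" unfolding cls_def tens_eq_def by simp

lemma h_cls: "m \<in> Nset \<Longrightarrow> x \<in> W \<Longrightarrow>
   h (lam (cls S m x)) = ((real (fst m) + fst (h x)) / 3, (real (snd m) + snd (h x)) / 3)"
proof -
  assume a: "m \<in> Nset" "x \<in> W"
  have "h (lam (cls S m x)) = pos h (m, x)" using h4 cls_car[OF a] cls_mem by blast
  then show ?thesis unfolding pos_def by simp
qed

lemma cls_short: "m \<in> Nset \<Longrightarrow> x \<in> W \<Longrightarrow> y \<in> W \<Longrightarrow>
   d (lam (cls S m x)) (lam (cls S m y)) \<le> d x y / 3"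
proof -
  assume a: "m \<in> Nset" "x \<in> W" "y \<in> W"
  have "d (lam (cls S m x)) (lam (cls S m y)) \<le> tens_dist W d S (cls S m x) (cls S m y)"
    using lam_short cls_car a by blast
  also have "\<dots> \<le> base_dist d (m, x) (m, y)"
    using tens_dist_le_chain[OF nn, where n=1 and p="\<lambda>_. (m, x)" and q="\<lambda>_. (m, y)"
        and A="cls S m x" and B="cls S m y" and S=S] a cls_mem by auto
  finally show ?thesis by (simp add: base_dist_def)
qed

definition gp :: "real \<times> real \<Rightarrow> 'a" where "gp P = lam (tens_S S P)"

lemma gp_cell: "incell n P \<Longrightarrow> loc n P \<in> M0 \<Longrightarrow> gp P = lam (cls S n (S (loc n P)))"
  unfolding gp_def cls_def using tens_S_cell[of n P S] by simp

lemma gp_S: "p \<in> M0 \<Longrightarrow> gp p = S p" unfolding gp_def using lamS by blast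

lemma gp_W: "incell n P \<Longrightarrow> loc n P \<in> M0 \<Longrightarrow> gp P \<in> W"
proof -
  assume a: "incell n P" "loc n P \<in> M0"
  have "n \<in> Nset" using a unfolding incell_def by blast
  then have "cls S n (S (loc n P)) \<in> tens_car W S" using cls_car SW' a(2) by blast
  then show ?thesis using gp_cell[OF a] lamW by simp
qed

lemma h_gp: "incell n P \<Longrightarrow> loc n P \<in> M0 \<Longrightarrow> h (gp P) = P"
proof -
  assume a: "incell n P" "loc n P \<in> M0"
  have "n \<in> Nset" using a unfolding incell_def by blast
  then have "h (gp P) = ((real (fst n) + fst (h (S (loc n P)))) / 3, (real (snd n) + snd (h (S (loc n P)))) / 3)"
    using gp_cell[OF a] h_cls[OF _ SW'[OF a(2)]] by simp
  also have "\<dots> = P"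
  proof -
    have e: "h (S (loc n P)) = loc n P" using h3 a(2) by blast
    show ?thesis unfolding e by (simp add: loc_def prod_eq_iff)
  qed
  finally show ?thesis .
qed


lemma cross_row:
  assumes j: "j \<in> {0,1,2}" and t: "0 \<le> t" "t \<le> 1"
  shows "d (lam (cls S (0, j) (S (0, t)))) (lam (cls S (2, j) (S (1, t)))) \<le> d (S (0, t)) (S (1, t))"
proof -
  define p where "p = (\<lambda>i::nat. ((i, j), S (0, t)))"
  define q where "q = (\<lambda>i::nat. ((i, j), S (1, t)))"
  have M: "(0, t) \<in> M0" "(1, t) \<in> M0" using t unfolding M0_def by auto
  have W: "S (0, t) \<in> W" "S (1, t) \<in> W" using SW' M by auto
  have pq: "\<forall>i<3. p i \<in> Nset \<times> W \<and> q i \<in> Nset \<times> W"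
    using j W unfolding p_def q_def Nset_def by auto
  have ch: "\<forall>i. Suc i < 3 \<longrightarrow> (q i, p (Suc i)) \<in> tens_eq S"
  proof (intro allI impI)
    fix i :: nat assume "Suc i < 3"
    then show "(q i, p (Suc i)) \<in> tens_eq S"
      unfolding p_def q_def using j M by (intro glue) (auto simp: Nset_def)
  qed
  have "d (lam (cls S (0, j) (S (0, t)))) (lam (cls S (2, j) (S (1, t))))
      \<le> tens_dist W d S (cls S (0, j) (S (0, t))) (cls S (2, j) (S (1, t)))"
    using lam_short cls_car j W unfolding Nset_def by auto
  also have "\<dots> \<le> (\<Sum>i<3. base_dist d (p i) (q i))"
    by (rule tens_dist_le_chain[OF nn _ pq _ _ ch]) (auto simp: p_def q_def cls_mem)
  also have "\<dots> = d (S (0, t)) (S (1, t))"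
    unfolding p_def q_def base_dist_def by (simp add: numeral_3_eq_3)
  finally show ?thesis .
qed

lemma cross_col:
  assumes j: "j \<in> {0,1,2}" and t: "0 \<le> t" "t \<le> 1"
  shows "d (lam (cls S (j, 0) (S (t, 0)))) (lam (cls S (j, 2) (S (t, 1)))) \<le> d (S (t, 0)) (S (t, 1))"
proof -
  define p where "p = (\<lambda>i::nat. ((j, i), S (t, 0)))"
  define q where "q = (\<lambda>i::nat. ((j, i), S (t, 1)))"
  have M: "(t, 0) \<in> M0" "(t, 1) \<in> M0" using t unfolding M0_def by auto
  have W: "S (t, 0) \<in> W" "S (t, 1) \<in> W" using SW' M by auto
  have pq: "\<forall>i<3. p i \<in> Nset \<times> W \<and> q i \<in> Nset \<times> W"
    using j W unfolding p_def q_def Nset_def by auto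
  have ch: "\<forall>i. Suc i < 3 \<longrightarrow> (q i, p (Suc i)) \<in> tens_eq S"
  proof (intro allI impI)
    fix i :: nat assume "Suc i < 3"
    then show "(q i, p (Suc i)) \<in> tens_eq S"
      unfolding p_def q_def using j M by (intro glue) (auto simp: Nset_def)
  qed
  have "d (lam (cls S (j, 0) (S (t, 0)))) (lam (cls S (j, 2) (S (t, 1))))
      \<le> tens_dist W d S (cls S (j, 0) (S (t, 0))) (cls S (j, 2) (S (t, 1)))"
    using lam_short cls_car j W unfolding Nset_def by auto
  also have "\<dots> \<le> (\<Sum>i<3. base_dist d (p i) (q i))"
    by (rule tens_dist_le_chain[OF nn _ pq _ _ ch]) (auto simp: p_def q_def cls_mem)
  also have "\<dots> = d (S (t, 0)) (S (t, 1))"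
    unfolding p_def q_def base_dist_def by (simp add: numeral_3_eq_3)
  finally show ?thesis .
qed


lemma K1: "i \<le> 3 ^ k \<Longrightarrow> d (S (0, real i / 3 ^ k)) (S (1, real i / 3 ^ k)) \<le> 1 \<and>
    d (S (real i / 3 ^ k, 0)) (S (real i / 3 ^ k, 1)) \<le> 1"
proof (induction k arbitrary: i)
  case 0
  then have i: "real i \<in> {0, 1}" by auto
  have "d (S (0, real i)) (S (1, real i)) = 1" using sq1b[OF i, of 0 1] by simp
  moreover have "d (S (real i, 0)) (S (real i, 1)) = 1" using sq1a[OF i, of 0 1] by simp
  ultimately show ?case by simp
next
  case (Suc k)
  obtain j i' where ji: "j \<le> (2::nat)" "i' \<le> 3 ^ k" "i = j * 3 ^ k + i'"
  proof -
    consider "i < 3 ^ k" | "3 ^ k \<le> i \<and> i < 2 * 3 ^ k" | "2 * 3 ^ k \<le> i" by linarith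
    then show ?thesis
    proof cases
      case 1 then show ?thesis using that[of 0 i] by auto
    next
      case 2 then show ?thesis using that[of 1 "i - 3 ^ k"] by auto
    next
      case 3 then show ?thesis using that[of 2 "i - 2 * 3 ^ k"] Suc.prems by auto
    qed
  qed
  define t where "t = real i / 3 ^ Suc k"
  define t' where "t' = real i' / 3 ^ k"
  have t't: "t' = 3 * t - real j"
    unfolding t_def t'_def ji(3) by (simp add: field_simps)
  have t'01: "0 \<le> t'" "t' \<le> 1" unfolding t'_def using ji(2) by (auto simp: field_simps)
  have t01: "0 \<le> t" "t \<le> 1" using t't t'01 ji(1) by auto
  have jN: "j \<in> {0,1,2}" using ji(1) by auto
  have IH: "d (S (0, t')) (S (1, t')) \<le> 1 \<and> d (S (t', 0)) (S (t', 1)) \<le> 1"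
    unfolding t'_def using Suc.IH[OF ji(2)] .
  have jr: "real j \<le> 2" using ji(1) by auto
  have ic1: "incell (0, j) (0, t)" "incell (2, j) (1, t)" "incell (j, 0) (t, 0)" "incell (j, 2) (t, 1)"
    unfolding incell_def Nset_def using jN t't t'01 by auto
  have l1: "loc (0, j) (0, t) = (0, t')" "loc (2, j) (1, t) = (1, t')"
     "loc (j, 0) (t, 0) = (t', 0)" "loc (j, 2) (t, 1) = (t', 1)"
    unfolding loc_def using t't by auto
  have M: "(0, t') \<in> M0" "(1, t') \<in> M0" "(t', 0) \<in> M0" "(t', 1) \<in> M0"
    "(0, t) \<in> M0" "(1, t) \<in> M0" "(t, 0) \<in> M0" "(t, 1) \<in> M0"
    using t'01 t01 unfolding M0_def by auto
  have "S (0, t) = lam (cls S (0, j) (S (0, t')))"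
    using gp_S[OF M(5)] gp_cell[OF ic1(1)] l1(1) M(1) by simp
  moreover have "S (1, t) = lam (cls S (2, j) (S (1, t')))"
    using gp_S[OF M(6)] gp_cell[OF ic1(2)] l1(2) M(2) by simp
  moreover have "S (t, 0) = lam (cls S (j, 0) (S (t', 0)))"
    using gp_S[OF M(7)] gp_cell[OF ic1(3)] l1(3) M(3) by simp
  moreover have "S (t, 1) = lam (cls S (j, 2) (S (t', 1)))"
    using gp_S[OF M(8)] gp_cell[OF ic1(4)] l1(4) M(4) by simp
  ultimately have "d (S (0, t)) (S (1, t)) \<le> 1 \<and> d (S (t, 0)) (S (t, 1)) \<le> 1"
    using cross_row[OF jN t'01] cross_col[OF jN t'01] IH by auto
  then show ?case unfolding t_def .
qed


lemma opp_row:
  assumes "0 \<le> t" "t \<le> 1" "0 \<le> s" "s \<le> 1"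
  shows "d (S (0, t)) (S (1, s)) \<le> 1 + \<bar>t - s\<bar>"
proof (rule le_eps3, rule allI)
  fix k :: nat
  obtain i where i: "i \<le> 3 ^ k" "\<bar>t - real i / 3 ^ k\<bar> \<le> 1 / 3 ^ k"
    using grid_approx[OF assms(1,2)] by blast
  define g where "g = real i / 3 ^ k"
  have g01: "0 \<le> g" "g \<le> 1" unfolding g_def using i(1) by (auto simp: field_simps)
  have M: "(0, t) \<in> M0" "(1, s) \<in> M0" "(0, g) \<in> M0" "(1, g) \<in> M0"
    using assms g01 unfolding M0_def by auto
  have W: "S (0, t) \<in> W" "S (1, s) \<in> W" "S (0, g) \<in> W" "S (1, g) \<in> W" using M SW' by auto
  have "d (S (0, t)) (S (1, s)) \<le> d (S (0, t)) (S (0, g)) + d (S (0, g)) (S (1, s))"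
    using dtri W by blast
  also have "d (S (0, g)) (S (1, s)) \<le> d (S (0, g)) (S (1, g)) + d (S (1, g)) (S (1, s))"
    using dtri W by blast
  also have "d (S (0, t)) (S (0, g)) = \<bar>g - t\<bar>" using sq1a assms g01 by simp
  also have "d (S (1, g)) (S (1, s)) = \<bar>s - g\<bar>" using sq1a assms g01 by simp
  also have "d (S (0, g)) (S (1, g)) \<le> 1" using K1[OF i(1)] unfolding g_def by blast
  finally have "d (S (0, t)) (S (1, s)) \<le> \<bar>g - t\<bar> + (1 + \<bar>s - g\<bar>)" by simp
  moreover have "\<bar>g - t\<bar> \<le> 1 / 3 ^ k" using i(2) unfolding g_def by simp
  ultimately show "d (S (0, t)) (S (1, s)) \<le> 1 + \<bar>t - s\<bar> + 2 / 3 ^ k" by simp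
qed

lemma opp_col:
  assumes "0 \<le> t" "t \<le> 1" "0 \<le> s" "s \<le> 1"
  shows "d (S (t, 0)) (S (s, 1)) \<le> 1 + \<bar>t - s\<bar>"
proof (rule le_eps3, rule allI)
  fix k :: nat
  obtain i where i: "i \<le> 3 ^ k" "\<bar>t - real i / 3 ^ k\<bar> \<le> 1 / 3 ^ k"
    using grid_approx[OF assms(1,2)] by blast
  define g where "g = real i / 3 ^ k"
  have g01: "0 \<le> g" "g \<le> 1" unfolding g_def using i(1) by (auto simp: field_simps)
  have M: "(t, 0) \<in> M0" "(s, 1) \<in> M0" "(g, 0) \<in> M0" "(g, 1) \<in> M0"
    using assms g01 unfolding M0_def by auto
  have W: "S (t, 0) \<in> W" "S (s, 1) \<in> W" "S (g, 0) \<in> W" "S (g, 1) \<in> W" using M SW' by auto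
  have "d (S (t, 0)) (S (s, 1)) \<le> d (S (t, 0)) (S (g, 0)) + d (S (g, 0)) (S (s, 1))"
    using dtri W by blast
  also have "d (S (g, 0)) (S (s, 1)) \<le> d (S (g, 0)) (S (g, 1)) + d (S (g, 1)) (S (s, 1))"
    using dtri W by blast
  also have "d (S (t, 0)) (S (g, 0)) = \<bar>g - t\<bar>" using sq1b assms g01 by simp
  also have "d (S (g, 1)) (S (s, 1)) = \<bar>s - g\<bar>" using sq1b assms g01 by simp
  also have "d (S (g, 0)) (S (g, 1)) \<le> 1" using K1[OF i(1)] unfolding g_def by blast
  finally have "d (S (t, 0)) (S (s, 1)) \<le> \<bar>g - t\<bar> + (1 + \<bar>s - g\<bar>)" by simp
  moreover have "\<bar>g - t\<bar> \<le> 1 / 3 ^ k" using i(2) unfolding g_def by simp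
  ultimately show "d (S (t, 0)) (S (s, 1)) \<le> 1 + \<bar>t - s\<bar> + 2 / 3 ^ k" by simp
qed

lemma BP_corner:
  assumes u: "u \<in> M0" and v: "v \<in> M0" and fu: "fst u \<in> {0,1}" and sv: "snd v \<in> {0,1}"
  shows "d (S u) (S v) \<le> taxicab u v"
proof -
  obtain a b where ab: "u = (a, b)" by (cases u)
  obtain a' b' where ab': "v = (a', b')" by (cases v)
  have r: "0 \<le> a" "a \<le> 1" "0 \<le> b" "b \<le> 1" "0 \<le> a'" "a' \<le> 1" "0 \<le> b'" "b' \<le> 1"
    using u v unfolding ab ab' M0_def by auto
  have a: "a \<in> {0,1}" and b': "b' \<in> {0,1}" using fu sv ab ab' by auto
  have c: "(a, b') \<in> M0" using a r unfolding M0_def by auto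
  have W: "S (a, b) \<in> W" "S (a, b') \<in> W" "S (a', b') \<in> W" using SW' u v c ab ab' by auto
  have "d (S (a, b)) (S (a', b')) \<le> d (S (a, b)) (S (a, b')) + d (S (a, b')) (S (a', b'))"
    using dtri W by blast
  also have "\<dots> = \<bar>b' - b\<bar> + \<bar>a' - a\<bar>" using sq1a[OF a] sq1b[OF b'] r by simp
  finally show ?thesis unfolding ab ab' taxicab_def by simp
qed

lemma BP:
  assumes u: "u \<in> M0" and v: "v \<in> M0"
  shows "d (S u) (S v) \<le> taxicab u v"
proof -
  obtain a b where ab: "u = (a, b)" by (cases u)
  obtain a' b' where ab': "v = (a', b')" by (cases v)
  have r: "0 \<le> a" "a \<le> 1" "0 \<le> b" "b \<le> 1" "0 \<le> a'" "a' \<le> 1" "0 \<le> b'" "b' \<le> 1"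
    using u v unfolding ab ab' M0_def by auto
  have W: "S u \<in> W" "S v \<in> W" using SW' u v by auto
  have su: "a \<in> {0,1} \<or> b \<in> {0,1}" and sv: "a' \<in> {0,1} \<or> b' \<in> {0,1}"
    using u v unfolding ab ab' M0_def by auto
  consider "a \<in> {0,1} \<and> b' \<in> {0,1}" | "b \<in> {0,1} \<and> a' \<in> {0,1}" | "a \<in> {0,1} \<and> a' \<in> {0,1}"
    | "b \<in> {0,1} \<and> b' \<in> {0,1}" using su sv by blast
  then show ?thesis
  proof cases
    case 1 then show ?thesis using BP_corner[OF u v] ab ab' by simp
  next
    case 2
    then have "d (S v) (S u) \<le> taxicab v u" using BP_corner[OF v u] ab ab' by simp
    then show ?thesis using dsym[OF W] taxi_sym by metis
  next
    case 3
    show ?thesis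
    proof (cases "a = a'")
      case True
      then show ?thesis using sq1a[of a b b'] 3 r unfolding ab ab' taxicab_def by simp
    next
      case False
      then have "(a = 0 \<and> a' = 1) \<or> (a = 1 \<and> a' = 0)" using 3 by auto
      then show ?thesis
      proof
        assume "a = 0 \<and> a' = 1"
        then show ?thesis using opp_row[of b b'] r unfolding ab ab' taxicab_def by simp
      next
        assume aa: "a = 1 \<and> a' = 0"
        have "d (S (0, b')) (S (1, b)) \<le> 1 + \<bar>b' - b\<bar>" using opp_row[of b' b] r by simp
        then show ?thesis using dsym[OF W] aa unfolding ab ab' taxicab_def by (simp add: abs_minus_commute)
      qed
    qed
  next
    case 4
    show ?thesis
    proof (cases "b = b'")
      case True
      then show ?thesis using sq1b[of b a a'] 4 r unfolding ab ab' taxicab_def by simp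
    next
      case False
      then have "(b = 0 \<and> b' = 1) \<or> (b = 1 \<and> b' = 0)" using 4 by auto
      then show ?thesis
      proof
        assume "b = 0 \<and> b' = 1"
        then show ?thesis using opp_col[of a a'] r unfolding ab ab' taxicab_def by simp
      next
        assume bb: "b = 1 \<and> b' = 0"
        have "d (S (a', 0)) (S (a, 1)) \<le> 1 + \<bar>a' - a\<bar>" using opp_col[of a' a] r by simp
        then show ?thesis using dsym[OF W] bb unfolding ab ab' taxicab_def by (simp add: abs_minus_commute)
      qed
    qed
  qed
qed


lemma grid_gp:
  assumes "isgrid P" shows "gp P \<in> W" "h (gp P) = P"
proof -
  obtain n where n: "incell n P" using incell_exists assms unfolding isgrid_def by blast
  show "gp P \<in> W" using gp_W[OF n grid_loc[OF assms n]] .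
  show "h (gp P) = P" using h_gp[OF n grid_loc[OF assms n]] .
qed

lemma IC:
  assumes P: "isgrid P" and Q: "isgrid Q" and nP: "incell n P" and nQ: "incell n Q"
  shows "d (gp P) (gp Q) \<le> taxicab P Q"
proof -
  have lP: "loc n P \<in> M0" and lQ: "loc n Q \<in> M0" using grid_loc P Q nP nQ by auto
  have nN: "n \<in> Nset" using nP unfolding incell_def by blast
  have "d (gp P) (gp Q) = d (lam (cls S n (S (loc n P)))) (lam (cls S n (S (loc n Q))))"
    using gp_cell[OF nP lP] gp_cell[OF nQ lQ] by simp
  also have "\<dots> \<le> d (S (loc n P)) (S (loc n Q)) / 3"
    using cls_short[OF nN SW'[OF lP] SW'[OF lQ]] .
  also have "\<dots> \<le> taxicab (loc n P) (loc n Q) / 3"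
    using BP[OF lP lQ] by (simp add: divide_right_mono)
  also have "\<dots> = taxicab P Q"
  proof -
    have "taxicab (loc n P) (loc n Q) = 3 * taxicab P Q"
    proof -
      have e: "\<bar>3 * (x::real) - c - (3 * y - c)\<bar> = 3 * \<bar>x - y\<bar>" for x y c
        by (simp add: abs_if)
      show ?thesis unfolding taxicab_def loc_def by (simp only: fst_conv snd_conv e) simp
    qed
    then show ?thesis by simp
  qed
  finally show ?thesis .
qed

lemma H1:
  assumes P: "isgrid (a, y)" and Q: "isgrid (b, y)" and i: "i \<in> {0,1,2::nat}"
    and ab: "real i / 3 \<le> a" "a \<le> (real i + 1) / 3" "real i / 3 \<le> b" "b \<le> (real i + 1) / 3"
  shows "d (gp (a, y)) (gp (b, y)) \<le> \<bar>a - b\<bar>"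
proof -
  have y: "0 \<le> y" "y \<le> 1" using P unfolding isgrid_def U0_def by auto
  obtain j where j: "j \<in> {0,1,2}" "real j / 3 \<le> y" "y \<le> (real j + 1) / 3"
    using cell_exists[OF y] by blast
  have "incell (i, j) (a, y)" "incell (i, j) (b, y)" unfolding incell_def Nset_def using i j ab by auto
  then show ?thesis using IC[OF P Q] unfolding taxicab_def by simp
qed

lemma V1:
  assumes P: "isgrid (y, a)" and Q: "isgrid (y, b)" and i: "i \<in> {0,1,2::nat}"
    and ab: "real i / 3 \<le> a" "a \<le> (real i + 1) / 3" "real i / 3 \<le> b" "b \<le> (real i + 1) / 3"
  shows "d (gp (y, a)) (gp (y, b)) \<le> \<bar>a - b\<bar>"
proof -
  have y: "0 \<le> y" "y \<le> 1" using P unfolding isgrid_def U0_def by auto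
  obtain j where j: "j \<in> {0,1,2}" "real j / 3 \<le> y" "y \<le> (real j + 1) / 3"
    using cell_exists[OF y] by blast
  have "incell (j, i) (y, a)" "incell (j, i) (y, b)" unfolding incell_def Nset_def using i j ab by auto
  then show ?thesis using IC[OF P Q] unfolding taxicab_def by simp
qed

lemma H_le:
  assumes P: "isgrid (a, y)" and Q: "isgrid (b, y)" and ab: "a \<le> b"
  shows "d (gp (a, y)) (gp (b, y)) \<le> b - a"
proof -
  have r: "0 \<le> a" "b \<le> 1" "0 \<le> y" "y \<le> 1" using P Q unfolding isgrid_def U0_def by auto
  have c1: "isgrid (1/3, y)" and c2: "isgrid (2/3, y)" using r unfolding isgrid_def U0_def G1_def by auto
  have W: "gp (a, y) \<in> W" "gp (b, y) \<in> W" "gp (1/3, y) \<in> W" "gp (2/3, y) \<in> W"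
    using grid_gp P Q c1 c2 by auto
  consider "b \<le> 1/3" | "2/3 \<le> a" | "1/3 \<le> a \<and> b \<le> 2/3" | "a \<le> 1/3 \<and> 1/3 \<le> b \<and> b \<le> 2/3"
    | "1/3 \<le> a \<and> a \<le> 2/3 \<and> 2/3 \<le> b" | "a \<le> 1/3 \<and> 2/3 \<le> b" by linarith
  then show ?thesis
  proof cases
    case 1 then show ?thesis using H1[OF P Q, of 0] r ab by simp
  next
    case 2 then show ?thesis using H1[OF P Q, of 2] r ab by simp
  next
    case 3 then show ?thesis using H1[OF P Q, of 1] r ab by simp
  next
    case 4
    have "d (gp (a, y)) (gp (b, y)) \<le> d (gp (a, y)) (gp (1/3, y)) + d (gp (1/3, y)) (gp (b, y))"
      using dtri W by blast
    also have "\<dots> \<le> \<bar>a - 1/3\<bar> + \<bar>1/3 - b\<bar>"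
      using H1[OF P c1, of 0] H1[OF c1 Q, of 1] 4 r by (intro add_mono) auto
    finally show ?thesis using 4 by simp
  next
    case 5
    have "d (gp (a, y)) (gp (b, y)) \<le> d (gp (a, y)) (gp (2/3, y)) + d (gp (2/3, y)) (gp (b, y))"
      using dtri W by blast
    also have "\<dots> \<le> \<bar>a - 2/3\<bar> + \<bar>2/3 - b\<bar>"
      using H1[OF P c2, of 1] H1[OF c2 Q, of 2] 5 r by (intro add_mono) auto
    finally show ?thesis using 5 by simp
  next
    case 6
    have "d (gp (a, y)) (gp (b, y)) \<le> d (gp (a, y)) (gp (1/3, y)) + d (gp (1/3, y)) (gp (b, y))"
      using dtri W by blast
    also have "d (gp (1/3, y)) (gp (b, y)) \<le> d (gp (1/3, y)) (gp (2/3, y)) + d (gp (2/3, y)) (gp (b, y))"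
      using dtri W by blast
    also have "d (gp (a, y)) (gp (1/3, y)) \<le> \<bar>a - 1/3\<bar>" using H1[OF P c1, of 0] 6 r by simp
    also have "d (gp (1/3, y)) (gp (2/3, y)) \<le> \<bar>1/3 - 2/3\<bar>" using H1[OF c1 c2, of 1] by simp
    also have "d (gp (2/3, y)) (gp (b, y)) \<le> \<bar>2/3 - b\<bar>" using H1[OF c2 Q, of 2] 6 r by simp
    finally show ?thesis using 6 by simp
  qed
qed

lemma V_le:
  assumes P: "isgrid (y, a)" and Q: "isgrid (y, b)" and ab: "a \<le> b"
  shows "d (gp (y, a)) (gp (y, b)) \<le> b - a"
proof -
  have r: "0 \<le> a" "b \<le> 1" "0 \<le> y" "y \<le> 1" using P Q unfolding isgrid_def U0_def by auto
  have c1: "isgrid (y, 1/3)" and c2: "isgrid (y, 2/3)" using r unfolding isgrid_def U0_def G1_def by auto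
  have W: "gp (y, a) \<in> W" "gp (y, b) \<in> W" "gp (y, 1/3) \<in> W" "gp (y, 2/3) \<in> W"
    using grid_gp P Q c1 c2 by auto
  consider "b \<le> 1/3" | "2/3 \<le> a" | "1/3 \<le> a \<and> b \<le> 2/3" | "a \<le> 1/3 \<and> 1/3 \<le> b \<and> b \<le> 2/3"
    | "1/3 \<le> a \<and> a \<le> 2/3 \<and> 2/3 \<le> b" | "a \<le> 1/3 \<and> 2/3 \<le> b" by linarith
  then show ?thesis
  proof cases
    case 1 then show ?thesis using V1[OF P Q, of 0] r ab by simp
  next
    case 2 then show ?thesis using V1[OF P Q, of 2] r ab by simp
  next
    case 3 then show ?thesis using V1[OF P Q, of 1] r ab by simp
  next
    case 4
    have "d (gp (y, a)) (gp (y, b)) \<le> d (gp (y, a)) (gp (y, 1/3)) + d (gp (y, 1/3)) (gp (y, b))"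
      using dtri W by blast
    also have "\<dots> \<le> \<bar>a - 1/3\<bar> + \<bar>1/3 - b\<bar>"
      using V1[OF P c1, of 0] V1[OF c1 Q, of 1] 4 r by (intro add_mono) auto
    finally show ?thesis using 4 by simp
  next
    case 5
    have "d (gp (y, a)) (gp (y, b)) \<le> d (gp (y, a)) (gp (y, 2/3)) + d (gp (y, 2/3)) (gp (y, b))"
      using dtri W by blast
    also have "\<dots> \<le> \<bar>a - 2/3\<bar> + \<bar>2/3 - b\<bar>"
      using V1[OF P c2, of 1] V1[OF c2 Q, of 2] 5 r by (intro add_mono) auto
    finally show ?thesis using 5 by simp
  next
    case 6
    have "d (gp (y, a)) (gp (y, b)) \<le> d (gp (y, a)) (gp (y, 1/3)) + d (gp (y, 1/3)) (gp (y, b))"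
      using dtri W by blast
    also have "d (gp (y, 1/3)) (gp (y, b)) \<le> d (gp (y, 1/3)) (gp (y, 2/3)) + d (gp (y, 2/3)) (gp (y, b))"
      using dtri W by blast
    also have "d (gp (y, a)) (gp (y, 1/3)) \<le> \<bar>a - 1/3\<bar>" using V1[OF P c1, of 0] 6 r by simp
    also have "d (gp (y, 1/3)) (gp (y, 2/3)) \<le> \<bar>1/3 - 2/3\<bar>" using V1[OF c1 c2, of 1] by simp
    also have "d (gp (y, 2/3)) (gp (y, b)) \<le> \<bar>2/3 - b\<bar>" using V1[OF c2 Q, of 2] 6 r by simp
    finally show ?thesis using 6 by simp
  qed
qed

lemma H_abs:
  assumes P: "isgrid (a, y)" and Q: "isgrid (b, y)"
  shows "d (gp (a, y)) (gp (b, y)) \<le> \<bar>a - b\<bar>"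
proof (cases "a \<le> b")
  case True then show ?thesis using H_le[OF P Q] by simp
next
  case False
  then have "d (gp (b, y)) (gp (a, y)) \<le> a - b" using H_le[OF Q P] by simp
  then show ?thesis using dsym grid_gp(1)[OF P] grid_gp(1)[OF Q] False by simp
qed

lemma V_abs:
  assumes P: "isgrid (y, a)" and Q: "isgrid (y, b)"
  shows "d (gp (y, a)) (gp (y, b)) \<le> \<bar>a - b\<bar>"
proof (cases "a \<le> b")
  case True then show ?thesis using V_le[OF P Q] by simp
next
  case False
  then have "d (gp (y, b)) (gp (y, a)) \<le> a - b" using V_le[OF Q P] by simp
  then show ?thesis using dsym grid_gp(1)[OF P] grid_gp(1)[OF Q] False by simp
qed

lemma GL:
  assumes P: "isgrid P" and Q: "isgrid Q"
  shows "d (gp P) (gp Q) \<le> taxicab P Q"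
proof -
  obtain a b where ab: "P = (a, b)" by (cases P)
  obtain a' b' where ab': "Q = (a', b')" by (cases Q)
  have r: "0 \<le> a" "a \<le> 1" "0 \<le> b" "b \<le> 1" "0 \<le> a'" "a' \<le> 1" "0 \<le> b'" "b' \<le> 1"
    using P Q unfolding ab ab' isgrid_def U0_def by auto
  have "b \<in> G1 \<or> a \<in> G1" using P unfolding ab isgrid_def by auto
  then show ?thesis
  proof
    assume b: "b \<in> G1"
    have R: "isgrid (a', b)" using b r unfolding isgrid_def U0_def by auto
    have "d (gp (a, b)) (gp (a', b')) \<le> d (gp (a, b)) (gp (a', b)) + d (gp (a', b)) (gp (a', b'))"
      using dtri grid_gp(1) P Q R ab ab' by blast
    also have "\<dots> \<le> \<bar>a - a'\<bar> + \<bar>b - b'\<bar>"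
      using H_abs[of a b a'] V_abs[of a' b b'] P Q R ab ab' by (intro add_mono) auto
    finally show ?thesis unfolding ab ab' taxicab_def by simp
  next
    assume a: "a \<in> G1"
    have R: "isgrid (a, b')" using a r unfolding isgrid_def U0_def by auto
    have "d (gp (a, b)) (gp (a', b')) \<le> d (gp (a, b)) (gp (a, b')) + d (gp (a, b')) (gp (a', b'))"
      using dtri grid_gp(1) P Q R ab ab' by blast
    also have "\<dots> \<le> \<bar>b - b'\<bar> + \<bar>a - a'\<bar>"
      using V_abs[of a b b'] H_abs[of a b' a'] P Q R ab ab' by (intro add_mono) auto
    finally show ?thesis unfolding ab ab' taxicab_def by simp
  qed
qed


lemma h_clsW: "m \<in> Nset \<Longrightarrow> x \<in> W \<Longrightarrow> incell m (h (lam (cls S m x)))"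
proof -
  assume a: "m \<in> Nset" "x \<in> W"
  have "h x \<in> U0" using h1 a by blast
  then show ?thesis using h_cls[OF a] a(1) unfolding incell_def U0_def by auto
qed

lemma loc_h: "m \<in> Nset \<Longrightarrow> x \<in> W \<Longrightarrow> loc m (h (lam (cls S m x))) = h x"
proof -
  assume a: "m \<in> Nset" "x \<in> W"
  have eq: "h (lam (cls S m x)) = ((real (fst m) + fst (h x)) / 3, (real (snd m) + snd (h x)) / 3)"
    by (rule h_cls[OF a])
  show ?thesis by (simp add: eq loc_def prod_eq_iff field_simps)
qed

lemma taxi_loc: "taxicab (loc n P) (loc n Q) = 3 * taxicab P Q"
proof -
  have e: "\<bar>3 * (x::real) - c - (3 * y - c)\<bar> = 3 * \<bar>x - y\<bar>" for x y c
    by (simp add: abs_if)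
  show ?thesis unfolding taxicab_def loc_def by (simp only: fst_conv snd_conv e) simp
qed

lemma to_grid:
  assumes m: "m \<in> Nset" and x: "x \<in> W" and P: "incell m P" "loc m P \<in> M0"
    and e: "\<forall>x\<in>W. \<forall>y\<in>W. d x y \<le> taxicab (h x) (h y) + e"
  shows "d (lam (cls S m x)) (gp P) \<le> taxicab (h (lam (cls S m x))) P + e / 3"
proof -
  have sW: "S (loc m P) \<in> W" using SW' P(2) .
  have "d (lam (cls S m x)) (gp P) = d (lam (cls S m x)) (lam (cls S m (S (loc m P))))"
    using gp_cell[OF P] by simp
  also have "\<dots> \<le> d x (S (loc m P)) / 3" using cls_short[OF m x sW] .
  also have "\<dots> \<le> (taxicab (h x) (loc m P) + e) / 3"
  proof -
    have "d x (S (loc m P)) \<le> taxicab (h x) (h (S (loc m P))) + e" using e x sW by blast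
    moreover have "h (S (loc m P)) = loc m P" using h3 P(2) by blast
    ultimately show ?thesis by (simp add: divide_right_mono)
  qed
  also have "taxicab (h x) (loc m P) = 3 * taxicab (h (lam (cls S m x))) P"
    using taxi_loc[of m "h (lam (cls S m x))" P] loc_h[OF m x] by simp
  finally show ?thesis by simp
qed

lemma step_bound:
  assumes surj: "\<forall>x\<in>W. \<exists>m x'. m \<in> Nset \<and> x' \<in> W \<and> x = lam (cls S m x')"
    and e: "\<forall>x\<in>W. \<forall>y\<in>W. d x y \<le> taxicab (h x) (h y) + e" and e0: "0 \<le> e"
    and x: "x \<in> W" and y: "y \<in> W"
  shows "d x y \<le> taxicab (h x) (h y) + 2 * e / 3"
proof -
  obtain m x' where mx: "m \<in> Nset" "x' \<in> W" "x = lam (cls S m x')" using surj x by blast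
  obtain n y' where ny: "n \<in> Nset" "y' \<in> W" "y = lam (cls S n y')" using surj y by blast
  show ?thesis
  proof (cases "m = n")
    case True
    have "d x y \<le> d x' y' / 3" using cls_short[OF mx(1,2) ny(2)] mx(3) ny(3) True by simp
    also have "\<dots> \<le> (taxicab (h x') (h y') + e) / 3" using e mx(2) ny(2) by (simp add: divide_right_mono)
    also have "taxicab (h x') (h y') = 3 * taxicab (h x) (h y)"
      using taxi_loc[of m "h x" "h y"] loc_h[OF mx(1,2)] loc_h[OF ny(1,2)] mx(3) ny(3) True by simp
    finally show ?thesis using e0 by simp
  next
    case False
    define X where "X = h x"
    define Y where "Y = h y"
    have iX: "incell m X" unfolding X_def using h_clsW[OF mx(1,2)] mx(3) by simp
    have iY: "incell n Y" unfolding Y_def using h_clsW[OF ny(1,2)] ny(3) by simp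
    define P where "P = Cl m Y"
    define Q where "Q = Cl n P"
    have iP: "incell m P" unfolding P_def using C_incell[OF mx(1)] .
    have iQ: "incell n Q" unfolding Q_def using C_incell[OF ny(1)] .
    have lP: "loc m P \<in> M0"
    proof (cases "incell m Y")
      case True
      then have "P = Y" unfolding P_def by (rule C_id)
      then show ?thesis using incell_bdry[OF True iY False] by simp
    next
      case False
      then show ?thesis unfolding P_def using C_bdry[OF mx(1)] by blast
    qed
    have lQ: "loc n Q \<in> M0"
    proof (cases "incell n P")
      case True
      then have "Q = P" unfolding Q_def by (rule C_id)
      then show ?thesis using incell_bdry[OF True iP] \<open>m \<noteq> n\<close> by simp
    next
      case False
      then show ?thesis unfolding Q_def using C_bdry[OF ny(1)] by blast
    qed
    have gP: "isgrid P" using loc_grid[OF iP lP] .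
    have gQ: "isgrid Q" using loc_grid[OF iQ lQ] .
    have add1: "taxicab X P + taxicab P Y = taxicab X Y" unfolding P_def using C_between[OF iX] .
    have add2: "taxicab Y Q + taxicab Q P = taxicab Y P" unfolding Q_def using C_between[OF iY] .
    have W: "gp P \<in> W" "gp Q \<in> W" using grid_gp gP gQ by auto
    have "d x y \<le> d x (gp P) + d (gp P) y" using dtri x y W by blast
    also have "d (gp P) y \<le> d (gp P) (gp Q) + d (gp Q) y" using dtri y W by blast
    also have "d x (gp P) \<le> taxicab X P + e / 3"
      using to_grid[OF mx(1,2) iP lP e] mx(3) unfolding X_def by simp
    also have "d (gp P) (gp Q) \<le> taxicab P Q" using GL[OF gP gQ] .
    also have "d (gp Q) y \<le> taxicab Y Q + e / 3"
    proof -
      have "d y (gp Q) \<le> taxicab Y Q + e / 3"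
        using to_grid[OF ny(1,2) iQ lQ e] ny(3) unfolding Y_def by simp
      then show ?thesis using dsym y W by simp
    qed
    finally have "d x y \<le> taxicab X P + taxicab P Q + taxicab Y Q + 2 * e / 3" by simp
    also have "taxicab X P + taxicab P Q + taxicab Y Q = taxicab X Y"
      using add1 add2 taxi_sym[of P Q] taxi_sym[of P Y] taxi_sym[of Q Y] by linarith
    finally show ?thesis unfolding X_def Y_def .
  qed
qed

lemma d_le_taxi:
  assumes surj: "\<forall>x\<in>W. \<exists>m x'. m \<in> Nset \<and> x' \<in> W \<and> x = lam (cls S m x')"
  shows "\<forall>x\<in>W. \<forall>y\<in>W. d x y \<le> taxicab (h x) (h y)"
proof -
  define E where "E = {d x y - taxicab (h x) (h y) | x y. x \<in> W \<and> y \<in> W}"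
  have W0: "S (0, 0) \<in> W" using SW' unfolding M0_def by simp
  have ne: "E \<noteq> {}" unfolding E_def using W0 by blast
  have bdd: "bdd_above E"
  proof (rule bdd_aboveI)
    fix t assume "t \<in> E"
    then obtain x y where "t = d x y - taxicab (h x) (h y)" "x \<in> W" "y \<in> W" unfolding E_def by blast
    then show "t \<le> 2" using dle2 taxi_nonneg[of "h x" "h y"] by fastforce
  qed
  define e where "e = Sup E"
  have up: "\<forall>x\<in>W. \<forall>y\<in>W. d x y \<le> taxicab (h x) (h y) + e"
  proof (intro ballI)
    fix x y assume "x \<in> W" "y \<in> W"
    then have "d x y - taxicab (h x) (h y) \<in> E" unfolding E_def by blast
    then have "d x y - taxicab (h x) (h y) \<le> e" unfolding e_def using bdd by (rule cSup_upper)
    then show "d x y \<le> taxicab (h x) (h y) + e" by simp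
  qed
  have e0: "0 \<le> e"
  proof -
    have "d (S (0,0)) (S (0,0)) - taxicab (h (S (0,0))) (h (S (0,0))) \<in> E" unfolding E_def using W0 by blast
    then have "0 \<in> E" using dself[OF W0] by simp
    then show ?thesis unfolding e_def using bdd by (rule cSup_upper)
  qed
  have "e \<le> 2 * e / 3" unfolding e_def
  proof (rule cSup_least[OF ne])
    fix t assume "t \<in> E"
    then obtain x y where "t = d x y - taxicab (h x) (h y)" "x \<in> W" "y \<in> W" unfolding E_def by blast
    then show "t \<le> 2 * Sup E / 3" using step_bound[OF surj up e0] unfolding e_def by fastforce
  qed
  then have "e \<le> 0" by simp
  then show ?thesis using up by (meson add_le_same_cancel1 order_trans)
qed

end


lemma M0_grid: "p \<in> M0 \<Longrightarrow> isgrid p"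
proof -
  assume p: "p \<in> M0"
  have "p \<in> U0" using p M0_U0 by blast
  moreover have "fst p \<in> {0,1} \<or> snd p \<in> {0,1}" using p unfolding M0_def by auto
  then have "fst p \<in> G1 \<or> snd p \<in> G1" unfolding G1_def by auto
  ultimately show ?thesis unfolding isgrid_def by blast
qed

lemma tens_S_in_car:
  assumes SX: "S ` M0 \<subseteq> X" and p: "p \<in> M0"
  shows "tens_S S p \<in> tens_car X S"
proof -
  obtain n where n: "incell n p" using incell_exists M0_U0 p by blast
  have l: "loc n p \<in> M0" using grid_loc[OF M0_grid[OF p] n] .
  have "tens_S S p = tens_eq S `` {(n, S (loc n p))}" using tens_S_cell[OF n l] .
  moreover have "(n, S (loc n p)) \<in> Nset \<times> X" using n l SX unfolding incell_def by auto
  ultimately show ?thesis unfolding tens_car_def by (simp add: quotientI)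
qed

lemma tens_car_mono:
  assumes "X' \<subseteq> X" shows "tens_car X' S \<subseteq> tens_car X S"
  using assms unfolding tens_car_def quotient_def by blast

definition chains :: "'a set \<Rightarrow> ('a \<Rightarrow> 'a \<Rightarrow> real) \<Rightarrow> (real \<times> real \<Rightarrow> 'a) \<Rightarrow>
    ((nat \<times> nat) \<times> 'a) set \<Rightarrow> ((nat \<times> nat) \<times> 'a) set \<Rightarrow> real set" where
  "chains X d S A B = {(\<Sum>i<n. base_dist d (p i) (q i)) | n p q.
       0 < n \<and> (\<forall>i<n. p i \<in> Nset \<times> X \<and> q i \<in> Nset \<times> X) \<and>
       p 0 \<in> A \<and> q (n - 1) \<in> B \<and>
       (\<forall>i. Suc i < n \<longrightarrow> (q i, p (Suc i)) \<in> tens_eq S)}"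

lemma tens_dist_chains: "tens_dist X d S A B = Inf (chains X d S A B)"
  unfolding tens_dist_def chains_def ..

lemma chains_ne:
  assumes "a \<in> A" "b \<in> B" "a \<in> Nset \<times> X" "b \<in> Nset \<times> X"
  shows "chains X d S A B \<noteq> {}"
proof -
  have "base_dist d a b \<in> chains X d S A B"
    unfolding chains_def
    apply (rule CollectI, rule exI[of _ 1], rule exI[of _ "\<lambda>_. a"], rule exI[of _ "\<lambda>_. b"])
    using assms by simp
  then show ?thesis by blast
qed

lemma tens_dist_sub:
  assumes sub: "X' \<subseteq> X" and nn: "\<forall>x\<in>X. \<forall>y\<in>X. 0 \<le> d x y" and SX: "S ` M0 \<subseteq> X'"
    and AB: "A \<in> tens_car X' S" "B \<in> tens_car X' S"
  shows "tens_dist X d S A B \<le> tens_dist X' d S A B"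
  unfolding tens_dist_chains[of X' d S A B]
proof (rule cInf_greatest)
  obtain a b where ab: "a \<in> A" "b \<in> B" using class_ne[OF AB(1)] class_ne[OF AB(2)] by blast
  have "a \<in> Nset \<times> X'" using in_tens_car_sub[OF SX AB(1)] ab(1) by (rule subsetD)
  moreover have "b \<in> Nset \<times> X'" using in_tens_car_sub[OF SX AB(2)] ab(2) by (rule subsetD)
  ultimately show "chains X' d S A B \<noteq> {}" by (rule chains_ne[OF ab])
next
  fix x assume "x \<in> chains X' d S A B"
  then obtain n p q where x: "x = (\<Sum>i<n. base_dist d (p i) (q i))" "0 < n"
    "\<forall>i<n. p i \<in> Nset \<times> X' \<and> q i \<in> Nset \<times> X'" "p 0 \<in> A" "q (n - 1) \<in> B"
    "\<forall>i. Suc i < n \<longrightarrow> (q i, p (Suc i)) \<in> tens_eq S" unfolding chains_def by blast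
  have sub2: "Nset \<times> X' \<subseteq> Nset \<times> X" using sub by auto
  have pq: "\<forall>i<n. p i \<in> Nset \<times> X \<and> q i \<in> Nset \<times> X" using x(3) sub2 by (meson subsetD)
  have "tens_dist X d S A B \<le> (\<Sum>i<n. base_dist d (p i) (q i))"
    by (rule tens_dist_le_chain[OF nn x(2) pq x(4) x(5) x(6)])
  then show "tens_dist X d S A B \<le> x" using x(1) by simp
qed

lemma metric_on_sub:
  assumes m: "metric_on X d" and sub: "Y \<subseteq> X" shows "metric_on Y d"
proof -
  have a: "\<forall>x\<in>X. \<forall>y\<in>X. 0 \<le> d x y \<and> d x y = d y x \<and> (d x y = 0 \<longleftrightarrow> x = y)"
    using m unfolding metric_on_def by (elim conjE) assumption
  have b: "\<forall>x\<in>X. \<forall>y\<in>X. \<forall>z\<in>X. d x z \<le> d x y + d y z"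
    using m unfolding metric_on_def by (elim conjE) assumption
  show ?thesis unfolding metric_on_def
  proof (intro conjI ballI)
    fix x y assume xy: "x \<in> Y" "y \<in> Y"
    then have "x \<in> X" "y \<in> X" using sub by auto
    then show "0 \<le> d x y" "d x y = d y x" "(d x y = 0) = (x = y)" using a by auto
    fix z assume "z \<in> Y"
    then have "z \<in> X" using sub by auto
    then show "d x z \<le> d x y + d y z" using b \<open>x \<in> X\<close> \<open>y \<in> X\<close> by blast
  qed
qed

lemma lambek:
  fixes W :: "'a set" and d :: "'a \<Rightarrow> 'a \<Rightarrow> real" and S :: "real \<times> real \<Rightarrow> 'a"
    and lam :: "((nat \<times> nat) \<times> 'a) set \<Rightarrow> 'a"
  assumes ini: "initial_alg W d S lam"
  shows "\<forall>x\<in>W. \<exists>m x'. m \<in> Nset \<and> x' \<in> W \<and> x = lam (cls S m x')"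
proof -
  have alg: "is_alg W d S lam" using ini unfolding initial_alg_def by (elim conjE) assumption
  have sq: "square_ms W d S" using alg unfolding is_alg_def by (elim conjE) assumption
  have lhom: "sq_hom (tens_car W S) (tens_dist W d S) (tens_S S) W d S lam"
    using alg unfolding is_alg_def by (elim conjE) assumption
  have met: "metric_on W d" using sq unfolding square_ms_def by (elim conjE) assumption
  have le2: "\<forall>x\<in>W. \<forall>y\<in>W. d x y \<le> 2" using sq unfolding square_ms_def by (elim conjE) assumption
  have SW: "S ` M0 \<subseteq> W" using sq unfolding square_ms_def by (elim conjE) assumption
  have injS: "inj_on S M0" using sq unfolding square_ms_def by (elim conjE) assumption
  have sq1: "\<forall>i\<in>{0, 1}. \<forall>r\<in>{0..1}. \<forall>s\<in>{0..1}.
        d (S (i, r)) (S (i, s)) = \<bar>s - r\<bar> \<and> d (S (r, i)) (S (s, i)) = \<bar>s - r\<bar>"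
    using sq unfolding square_ms_def by (elim conjE) assumption
  have sq2: "\<forall>p\<in>M0. \<forall>q\<in>M0. \<bar>fst p - fst q\<bar> + \<bar>snd p - snd q\<bar> \<le> d (S p) (S q)"
    using sq unfolding square_ms_def by (elim conjE) assumption
  have l1: "lam ` tens_car W S \<subseteq> W" using lhom unfolding sq_hom_def by (elim conjE) assumption
  have l2: "\<forall>x\<in>tens_car W S. \<forall>y\<in>tens_car W S. d (lam x) (lam y) \<le> tens_dist W d S x y"
    using lhom unfolding sq_hom_def by (elim conjE) assumption
  have l3: "\<forall>p\<in>M0. lam (tens_S S p) = S p"
    using lhom unfolding sq_hom_def by (elim conjE) assumption
  have nn: "\<forall>x\<in>W. \<forall>y\<in>W. 0 \<le> d x y" using met unfolding metric_on_def by blast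
  define W' where "W' = lam ` tens_car W S"
  have W'W: "W' \<subseteq> W" using l1 unfolding W'_def .
  have SW': "S ` M0 \<subseteq> W'"
  proof
    fix y assume "y \<in> S ` M0"
    then obtain p where p: "p \<in> M0" "y = S p" by blast
    have "tens_S S p \<in> tens_car W S" using tens_S_in_car[OF SW p(1)] .
    then show "y \<in> W'" unfolding W'_def using l3 p by force
  qed
  have car: "tens_car W' S \<subseteq> tens_car W S" using tens_car_mono[OF W'W] .
  have met': "metric_on W' d" using metric_on_sub[OF met W'W] .
  have le2': "\<forall>x\<in>W'. \<forall>y\<in>W'. d x y \<le> 2" using le2 W'W by blast
  have sq': "square_ms W' d S"
    unfolding square_ms_def using met' le2' SW' injS sq1 sq2 by (intro conjI)
  have hom': "sq_hom (tens_car W' S) (tens_dist W' d S) (tens_S S) W' d S lam"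
    unfolding sq_hom_def
  proof (intro conjI ballI)
    show "lam ` tens_car W' S \<subseteq> W'" using car unfolding W'_def by blast
    show "\<And>p. p \<in> M0 \<Longrightarrow> lam (tens_S S p) = S p" using l3 by blast
    fix A B assume AB: "A \<in> tens_car W' S" "B \<in> tens_car W' S"
    have "d (lam A) (lam B) \<le> tens_dist W d S A B" using l2 AB car by blast
    also have "\<dots> \<le> tens_dist W' d S A B" by (rule tens_dist_sub[OF W'W nn SW' AB])
    finally show "d (lam A) (lam B) \<le> tens_dist W' d S A B" .
  qed
  have alg': "is_alg W' d S lam" unfolding is_alg_def using sq' hom' by blast
  obtain g where g: "alg_hom W d S lam W' d S lam g"
    using ini alg' unfolding initial_alg_def by blast
  have gW: "g ` W \<subseteq> W'" using g unfolding alg_hom_def sq_hom_def by blast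
  have g1: "g ` W \<subseteq> W'" using g unfolding alg_hom_def sq_hom_def by (elim conjE) assumption
  have g2: "\<forall>x\<in>W. \<forall>y\<in>W. d (g x) (g y) \<le> d x y"
    using g unfolding alg_hom_def sq_hom_def by (elim conjE) assumption
  have g3: "\<forall>p\<in>M0. g (S p) = S p" using g unfolding alg_hom_def sq_hom_def by (elim conjE) assumption
  have g4: "\<forall>A\<in>tens_car W S. g (lam A) = lam (tens_map S g A)"
    using g unfolding alg_hom_def sq_hom_def by (elim conjE) assumption
  have gd: "alg_hom W d S lam W d S lam g"
    unfolding alg_hom_def sq_hom_def using g1 g2 g3 g4 W'W by (intro conjI) auto
  have idd: "alg_hom W d S lam W d S lam (\<lambda>x. x)"
    unfolding alg_hom_def sq_hom_def using tens_map_id[of _ W S] SW by auto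
  have ini2: "\<forall>(Y :: 'a set) e T mu. is_alg Y e T mu \<longrightarrow>
        (\<exists>h. alg_hom W d S lam Y e T mu h \<and>
             (\<forall>h'. alg_hom W d S lam Y e T mu h' \<longrightarrow> (\<forall>x\<in>W. h' x = h x)))"
    using ini unfolding initial_alg_def by (elim conjE) assumption
  obtain h0 where h0: "\<forall>h'. alg_hom W d S lam W d S lam h' \<longrightarrow> (\<forall>x\<in>W. h' x = h0 x)"
    using ini2[rule_format, OF alg] by blast
  have e1: "\<forall>x\<in>W. g x = h0 x" using h0[rule_format, OF gd] by blast
  have e2: "\<forall>x\<in>W. x = h0 x" using h0[rule_format, OF idd] by blast
  have gid: "\<forall>x\<in>W. g x = x" using e1 e2 by simp
  show ?thesis
  proof
    fix x assume x: "x \<in> W"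
    have "g x \<in> W'" using gW x by blast
    then have "x \<in> W'" using gid x by simp
    then obtain A where A: "A \<in> tens_car W S" "x = lam A" unfolding W'_def by blast
    from A(1) obtain z where z: "A = tens_eq S `` {z}" "z \<in> Nset \<times> W"
      unfolding tens_car_def by (rule quotientE)
    obtain m x' where mx: "z = (m, x')" by (cases z)
    have "x = lam (cls S m x')" unfolding cls_def using A(2) z(1) mx by simp
    moreover have "m \<in> Nset" "x' \<in> W" using z(2) mx by auto
    ultimately show "\<exists>m x'. m \<in> Nset \<and> x' \<in> W \<and> x = lam (cls S m x')" by blast
  qed
qed

context walg begin

lemma density: "\<forall>p\<in>U0. \<exists>w\<in>W. taxicab (h w) p \<le> 2 / 3 ^ k"
proof (induction k)
  case 0
  have W0: "S (0, 0) \<in> W" "h (S (0, 0)) = (0, 0)" using SW' h3 unfolding M0_def by auto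
  have "(0::real, 0::real) \<in> U0" unfolding U0_def by auto
  then have "taxicab (h (S (0, 0))) (0, 0) \<le> 2" using W0 taxi_le2 by simp
  then have "\<forall>p\<in>U0. taxicab (h (S (0, 0))) p \<le> 2" using W0 taxi_le2 \<open>(0, 0) \<in> U0\<close> by auto
  then show ?case using W0(1) by auto
next
  case (Suc k)
  show ?case
  proof
    fix p assume p: "p \<in> U0"
    obtain n where n: "incell n p" using incell_exists p by blast
    have nN: "n \<in> Nset" using n unfolding incell_def by blast
    obtain w where w: "w \<in> W" "taxicab (h w) (loc n p) \<le> 2 / 3 ^ k"
      using Suc incell_loc_U0[OF n] by blast
    have w'W: "lam (cls S n w) \<in> W" using lamW cls_car nN w(1) by blast
    have "3 * taxicab (h (lam (cls S n w))) p = taxicab (h w) (loc n p)"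
      using taxi_loc[of n "h (lam (cls S n w))" p] loc_h[OF nN w(1)] by simp
    then have "taxicab (h (lam (cls S n w))) p \<le> 2 / 3 ^ Suc k" using w(2) by simp
    then show "\<exists>w\<in>W. taxicab (h w) p \<le> 2 / 3 ^ Suc k" using w'W by blast
  qed
qed

end

lemma null_cmp:
  fixes f g :: "nat \<Rightarrow> real"
  assumes "\<And>n. 0 \<le> f n" "\<And>n. f n \<le> g n" "g \<longlonglongrightarrow> 0"
  shows "f \<longlonglongrightarrow> 0"
proof (rule Lim_null_comparison[OF _ assms(3)])
  show "\<forall>\<^sub>F n in sequentially. norm (f n) \<le> g n" using assms(1,2) by simp
qed

lemma taxi_fst: "\<bar>fst a - fst b\<bar> \<le> taxicab a b" unfolding taxicab_def by simp
lemma taxi_snd: "\<bar>snd a - snd b\<bar> \<le> taxicab a b" unfolding taxicab_def by simp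

lemma taxi_diff: "\<bar>taxicab a b - taxicab p q\<bar> \<le> taxicab a p + taxicab b q"
proof -
  have "taxicab a b \<le> taxicab a p + taxicab p q + taxicab q b"
    using taxi_tri[of a b p] taxi_tri[of p b q] by linarith
  moreover have "taxicab p q \<le> taxicab p a + taxicab a b + taxicab b q"
    using taxi_tri[of p q a] taxi_tri[of a q b] by linarith
  ultimately show ?thesis using taxi_sym[of q b] taxi_sym[of p a] by (simp add: abs_le_iff)
qed

definition conv :: "('a \<Rightarrow> real \<times> real) \<Rightarrow> (nat \<Rightarrow> 'a) \<Rightarrow> real \<times> real \<Rightarrow> bool" where
  "conv h \<sigma> p \<longleftrightarrow> (\<lambda>n. taxicab (h (\<sigma> n)) p) \<longlonglongrightarrow> 0"

lemma conv_unique: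
  assumes "conv h \<sigma> p" "conv h \<sigma> q" shows "p = q"
proof -
  have l: "(\<lambda>n. taxicab (h (\<sigma> n)) p + taxicab (h (\<sigma> n)) q) \<longlonglongrightarrow> 0 + 0"
    using assms unfolding conv_def by (rule tendsto_add)
  have "\<forall>n. taxicab p q \<le> taxicab (h (\<sigma> n)) p + taxicab (h (\<sigma> n)) q"
    using taxi_tri taxi_sym by metis
  then have "taxicab p q \<le> 0" using LIMSEQ_le_const[OF l] by simp
  then show ?thesis using taxi_nonneg[of p q] taxi_zero by (meson antisym)
qed

lemma conv_dist:
  assumes "conv h \<sigma> p" "conv h \<tau> q"
  shows "(\<lambda>n. taxicab (h (\<sigma> n)) (h (\<tau> n))) \<longlonglongrightarrow> taxicab p q"
proof (rule LIM_zero_cancel, rule tendsto_rabs_zero_cancel, rule null_cmp)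
  show "(\<lambda>n. taxicab (h (\<sigma> n)) p + taxicab (h (\<tau> n)) q) \<longlonglongrightarrow> 0"
    using tendsto_add[OF assms[unfolded conv_def]] by simp
  show "\<And>n. 0 \<le> \<bar>taxicab (h (\<sigma> n)) (h (\<tau> n)) - taxicab p q\<bar>" by simp
  show "\<And>n. \<bar>taxicab (h (\<sigma> n)) (h (\<tau> n)) - taxicab p q\<bar> \<le> taxicab (h (\<sigma> n)) p + taxicab (h (\<tau> n)) q"
    by (rule taxi_diff)
qed

lemma conv_trans:
  assumes "conv h \<sigma> p" "(\<lambda>n. taxicab (h (\<sigma> n)) (h (\<tau> n))) \<longlonglongrightarrow> 0"
  shows "conv h \<tau> p"
  unfolding conv_def
proof (rule null_cmp)
  show "(\<lambda>n. taxicab (h (\<sigma> n)) (h (\<tau> n)) + taxicab (h (\<sigma> n)) p) \<longlonglongrightarrow> 0"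
    using tendsto_add[OF assms(2) assms(1)[unfolded conv_def]] by simp
  show "\<And>n. 0 \<le> taxicab (h (\<tau> n)) p" by (rule taxi_nonneg)
  show "\<And>n. taxicab (h (\<tau> n)) p \<le> taxicab (h (\<sigma> n)) (h (\<tau> n)) + taxicab (h (\<sigma> n)) p"
    using taxi_tri taxi_sym by metis
qed

locale cmpl =
  fixes W :: "'a set" and d :: "'a \<Rightarrow> 'a \<Rightarrow> real" and S :: "real \<times> real \<Rightarrow> 'a"
    and h :: "'a \<Rightarrow> real \<times> real"
  assumes H1: "\<forall>x\<in>W. h x \<in> U0" and Hd: "\<forall>x\<in>W. \<forall>y\<in>W. d x y = taxicab (h x) (h y)"
    and Hden: "\<forall>k. \<forall>p\<in>U0. \<exists>w\<in>W. taxicab (h w) p \<le> 2 / 3 ^ k"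
    and HS: "\<forall>p\<in>M0. S p \<in> W \<and> h (S p) = p"
begin

definition LimP :: "(nat \<Rightarrow> 'a) \<Rightarrow> real \<times> real" where
  "LimP \<sigma> = (lim (\<lambda>n. fst (h (\<sigma> n))), lim (\<lambda>n. snd (h (\<sigma> n))))"

lemma cauchy_conv:
  assumes s: "\<sigma> \<in> cauchy_seqs W d"
  shows "conv h \<sigma> (LimP \<sigma>) \<and> LimP \<sigma> \<in> U0"
proof -
  have sW: "\<forall>n. \<sigma> n \<in> W" and c: "\<forall>\<epsilon>>0. \<exists>N. \<forall>m\<ge>N. \<forall>n\<ge>N. d (\<sigma> m) (\<sigma> n) < \<epsilon>"
    using s unfolding cauchy_seqs_def by auto
  have C1: "Cauchy (\<lambda>n. fst (h (\<sigma> n)))"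
  proof (rule CauchyI)
    fix e :: real assume "0 < e"
    then obtain N where N: "\<forall>m\<ge>N. \<forall>n\<ge>N. d (\<sigma> m) (\<sigma> n) < e" using c by blast
    have "\<forall>m\<ge>N. \<forall>n\<ge>N. norm (fst (h (\<sigma> m)) - fst (h (\<sigma> n))) < e"
      using N Hd sW taxi_fst by (smt (verit) real_norm_def)
    then show "\<exists>M. \<forall>m\<ge>M. \<forall>n\<ge>M. norm (fst (h (\<sigma> m)) - fst (h (\<sigma> n))) < e" by blast
  qed
  have C2: "Cauchy (\<lambda>n. snd (h (\<sigma> n)))"
  proof (rule CauchyI)
    fix e :: real assume "0 < e"
    then obtain N where N: "\<forall>m\<ge>N. \<forall>n\<ge>N. d (\<sigma> m) (\<sigma> n) < e" using c by blast
    have "\<forall>m\<ge>N. \<forall>n\<ge>N. norm (snd (h (\<sigma> m)) - snd (h (\<sigma> n))) < e"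
      using N Hd sW taxi_snd by (smt (verit) real_norm_def)
    then show "\<exists>M. \<forall>m\<ge>M. \<forall>n\<ge>M. norm (snd (h (\<sigma> m)) - snd (h (\<sigma> n))) < e" by blast
  qed
  have L1: "(\<lambda>n. fst (h (\<sigma> n))) \<longlonglongrightarrow> fst (LimP \<sigma>)"
    using C1 unfolding Cauchy_convergent_iff convergent_LIMSEQ_iff LimP_def by simp
  have L2: "(\<lambda>n. snd (h (\<sigma> n))) \<longlonglongrightarrow> snd (LimP \<sigma>)"
    using C2 unfolding Cauchy_convergent_iff convergent_LIMSEQ_iff LimP_def by simp
  have conv: "conv h \<sigma> (LimP \<sigma>)"
    unfolding conv_def taxicab_def
    using tendsto_add[OF tendsto_rabs_zero[OF LIM_zero[OF L1]] tendsto_rabs_zero[OF LIM_zero[OF L2]]]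
    by simp
  have b: "\<forall>n. 0 \<le> fst (h (\<sigma> n)) \<and> fst (h (\<sigma> n)) \<le> 1 \<and> 0 \<le> snd (h (\<sigma> n)) \<and> snd (h (\<sigma> n)) \<le> 1"
    using H1 sW unfolding U0_def by (auto simp: mem_Times_iff)
  have "0 \<le> fst (LimP \<sigma>)" using LIMSEQ_le_const[OF L1] b by blast
  moreover have "fst (LimP \<sigma>) \<le> 1" using LIMSEQ_le_const2[OF L1] b by blast
  moreover have "0 \<le> snd (LimP \<sigma>)" using LIMSEQ_le_const[OF L2] b by blast
  moreover have "snd (LimP \<sigma>) \<le> 1" using LIMSEQ_le_const2[OF L2] b by blast
  ultimately have "LimP \<sigma> \<in> U0" unfolding U0_def by (auto simp: mem_Times_iff)
  then show ?thesis using conv by blast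
qed

lemma conv_cauchy:
  assumes sW: "\<forall>n. \<sigma> n \<in> W" and c: "conv h \<sigma> p"
  shows "\<sigma> \<in> cauchy_seqs W d"
  unfolding cauchy_seqs_def
proof (intro CollectI conjI allI impI)
  show "\<sigma> n \<in> W" for n using sW by blast
  fix e :: real assume e: "0 < e"
  then have "0 < e / 2" by simp
  then obtain N where N: "\<forall>n\<ge>N. norm (taxicab (h (\<sigma> n)) p - 0) < e / 2"
    using c unfolding conv_def LIMSEQ_iff by blast
  have "\<forall>m\<ge>N. \<forall>n\<ge>N. d (\<sigma> m) (\<sigma> n) < e"
  proof (intro allI impI)
    fix m n assume "N \<le> m" "N \<le> n"
    then have "taxicab (h (\<sigma> m)) p < e / 2" "taxicab (h (\<sigma> n)) p < e / 2" using N by auto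
    moreover have "taxicab (h (\<sigma> m)) (h (\<sigma> n)) \<le> taxicab (h (\<sigma> m)) p + taxicab (h (\<sigma> n)) p"
      using taxi_tri taxi_sym by metis
    ultimately show "d (\<sigma> m) (\<sigma> n) < e" using Hd sW by simp
  qed
  then show "\<exists>N. \<forall>m\<ge>N. \<forall>n\<ge>N. d (\<sigma> m) (\<sigma> n) < e" by blast
qed

lemma ceq_iff:
  "(\<sigma>, \<tau>) \<in> ceq W d \<longleftrightarrow> \<sigma> \<in> cauchy_seqs W d \<and> \<tau> \<in> cauchy_seqs W d \<and>
     (\<lambda>n. taxicab (h (\<sigma> n)) (h (\<tau> n))) \<longlonglongrightarrow> 0"
proof -
  have "\<sigma> \<in> cauchy_seqs W d \<Longrightarrow> \<tau> \<in> cauchy_seqs W d \<Longrightarrow>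
      (\<lambda>n. d (\<sigma> n) (\<tau> n)) = (\<lambda>n. taxicab (h (\<sigma> n)) (h (\<tau> n)))"
    using Hd unfolding cauchy_seqs_def by auto
  then show ?thesis unfolding ceq_def by auto
qed

lemma ceq_conv: "(\<sigma>, \<tau>) \<in> ceq W d \<Longrightarrow> conv h \<sigma> p \<Longrightarrow> conv h \<tau> p"
  using ceq_iff conv_trans by blast

lemma conv_ceq:
  assumes "\<sigma> \<in> cauchy_seqs W d" "\<tau> \<in> cauchy_seqs W d" "conv h \<sigma> p" "conv h \<tau> p"
  shows "(\<sigma>, \<tau>) \<in> ceq W d"
  using assms conv_dist[OF assms(3,4)] unfolding ceq_iff by simp

lemma equiv_ceq: "equiv (cauchy_seqs W d) (ceq W d)"
proof (rule equivI)
  show "ceq W d \<subseteq> cauchy_seqs W d \<times> cauchy_seqs W d" unfolding ceq_def by auto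
  show "refl_on (cauchy_seqs W d) (ceq W d)"
  proof (rule refl_onI)
    fix \<sigma> assume s: "\<sigma> \<in> cauchy_seqs W d"
    then have "conv h \<sigma> (LimP \<sigma>)" using cauchy_conv by blast
    then show "(\<sigma>, \<sigma>) \<in> ceq W d" using conv_ceq s by blast
  qed
  show "sym (ceq W d)"
  proof (rule symI)
    fix \<sigma> \<tau> assume a: "(\<sigma>, \<tau>) \<in> ceq W d"
    then have s: "\<sigma> \<in> cauchy_seqs W d" "\<tau> \<in> cauchy_seqs W d" unfolding ceq_def by auto
    have "conv h \<sigma> (LimP \<sigma>)" using cauchy_conv s by blast
    then have "conv h \<tau> (LimP \<sigma>)" using ceq_conv a by blast
    then show "(\<tau>, \<sigma>) \<in> ceq W d" using conv_ceq s \<open>conv h \<sigma> (LimP \<sigma>)\<close> by blast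
  qed
  show "trans (ceq W d)"
  proof (rule transI)
    fix \<sigma> \<tau> \<rho> assume a: "(\<sigma>, \<tau>) \<in> ceq W d" "(\<tau>, \<rho>) \<in> ceq W d"
    then have s: "\<sigma> \<in> cauchy_seqs W d" "\<rho> \<in> cauchy_seqs W d" unfolding ceq_def by auto
    have c1: "conv h \<sigma> (LimP \<sigma>)" using cauchy_conv s by blast
    then have "conv h \<rho> (LimP \<sigma>)" using ceq_conv a by blast
    then show "(\<sigma>, \<rho>) \<in> ceq W d" using conv_ceq s c1 by blast
  qed
qed


lemma C_car_rep:
  assumes A: "A \<in> C_car W d"
  shows "(SOME \<sigma>. \<sigma> \<in> A) \<in> A \<and> (SOME \<sigma>. \<sigma> \<in> A) \<in> cauchy_seqs W d \<and>
    A = ceq W d `` {SOME \<sigma>. \<sigma> \<in> A}"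
proof -
  from A obtain \<sigma>0 where s0: "A = ceq W d `` {\<sigma>0}" "\<sigma>0 \<in> cauchy_seqs W d"
    unfolding C_car_def by (rule quotientE)
  have "\<sigma>0 \<in> A" using s0 equiv_class_self[OF equiv_ceq] by blast
  then have m: "(SOME \<sigma>. \<sigma> \<in> A) \<in> A" by (rule someI[where P="\<lambda>\<sigma>. \<sigma> \<in> A"])
  then have r: "(\<sigma>0, SOME \<sigma>. \<sigma> \<in> A) \<in> ceq W d" using s0 by simp
  then have "(SOME \<sigma>. \<sigma> \<in> A) \<in> cauchy_seqs W d" unfolding ceq_def by blast
  moreover have "A = ceq W d `` {SOME \<sigma>. \<sigma> \<in> A}"
    using s0(1) equiv_class_eq[OF equiv_ceq r] by simp
  ultimately show ?thesis using m by blast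
qed

definition F :: "(nat \<Rightarrow> 'a) set \<Rightarrow> real \<times> real" where
  "F A = LimP (SOME \<sigma>. \<sigma> \<in> A)"

definition seqp :: "real \<times> real \<Rightarrow> nat \<Rightarrow> 'a" where
  "seqp p = (\<lambda>n. SOME w. w \<in> W \<and> taxicab (h w) p \<le> 2 / 3 ^ n)"

definition G :: "real \<times> real \<Rightarrow> (nat \<Rightarrow> 'a) set" where
  "G p = ceq W d `` {seqp p}"

lemma seqp_prop: "p \<in> U0 \<Longrightarrow> seqp p n \<in> W \<and> taxicab (h (seqp p n)) p \<le> 2 / 3 ^ n"
proof -
  assume p: "p \<in> U0"
  then have "\<exists>w. w \<in> W \<and> taxicab (h w) p \<le> 2 / 3 ^ n" using Hden by blast
  then show ?thesis unfolding seqp_def by (rule someI_ex)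
qed

lemma pow_lim: "(\<lambda>n. 2 / 3 ^ n :: real) \<longlonglongrightarrow> 0"
proof -
  have "(\<lambda>n. 2 * (1/3::real) ^ n) \<longlonglongrightarrow> 2 * 0"
    by (intro tendsto_mult tendsto_const LIMSEQ_realpow_zero) auto
  then show ?thesis by (simp add: power_divide)
qed

lemma seqp_conv: "p \<in> U0 \<Longrightarrow> conv h (seqp p) p"
proof -
  assume p: "p \<in> U0"
  show ?thesis unfolding conv_def
  proof (rule null_cmp[OF _ _ pow_lim])
    show "\<And>n. 0 \<le> taxicab (h (seqp p n)) p" by (rule taxi_nonneg)
    show "\<And>n. taxicab (h (seqp p n)) p \<le> 2 / 3 ^ n" using seqp_prop[OF p] by blast
  qed
qed

lemma seqp_cauchy: "p \<in> U0 \<Longrightarrow> seqp p \<in> cauchy_seqs W d"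
proof -
  assume p: "p \<in> U0"
  have "\<forall>n. seqp p n \<in> W" using seqp_prop[OF p] by blast
  then show ?thesis using conv_cauchy seqp_conv[OF p] by blast
qed

lemma G_car: "p \<in> U0 \<Longrightarrow> G p \<in> C_car W d"
  unfolding G_def C_car_def by (rule quotientI) (rule seqp_cauchy)

lemma F_conv: "A \<in> C_car W d \<Longrightarrow> conv h (SOME \<sigma>. \<sigma> \<in> A) (F A) \<and> F A \<in> U0"
proof -
  assume A: "A \<in> C_car W d"
  have "(SOME \<sigma>. \<sigma> \<in> A) \<in> cauchy_seqs W d" using C_car_rep[OF A] by blast
  then show ?thesis unfolding F_def by (rule cauchy_conv)
qed

lemma F_G: assumes p: "p \<in> U0" shows "F (G p) = p"
proof -
  have GC: "G p \<in> C_car W d" using G_car p .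
  let ?s = "SOME \<sigma>. \<sigma> \<in> G p"
  have "?s \<in> G p" using C_car_rep[OF GC] by blast
  then have "(seqp p, ?s) \<in> ceq W d" unfolding G_def by simp
  then have "conv h ?s p" using ceq_conv seqp_conv[OF p] by blast
  moreover have "conv h ?s (F (G p))" using F_conv[OF GC] by blast
  ultimately show ?thesis using conv_unique by metis
qed

lemma G_F: assumes A: "A \<in> C_car W d" shows "G (F A) = A"
proof -
  let ?s = "SOME \<sigma>. \<sigma> \<in> A"
  have r: "?s \<in> A" "?s \<in> cauchy_seqs W d" "A = ceq W d `` {?s}" using C_car_rep[OF A] by blast+
  have c: "conv h ?s (F A)" "F A \<in> U0" using F_conv[OF A] by blast+
  have "(seqp (F A), ?s) \<in> ceq W d"
    using conv_ceq[OF seqp_cauchy[OF c(2)] r(2) seqp_conv[OF c(2)] c(1)] .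
  then have "G (F A) = ceq W d `` {?s}" unfolding G_def using equiv_class_eq[OF equiv_ceq] by blast
  then show ?thesis using r(3) by simp
qed

lemma C_dist_F:
  assumes A: "A \<in> C_car W d" and B: "B \<in> C_car W d"
  shows "C_dist d A B = taxicab (F A) (F B)"
proof -
  let ?s = "SOME \<sigma>. \<sigma> \<in> A" and ?t = "SOME \<tau>. \<tau> \<in> B"
  have s: "?s \<in> cauchy_seqs W d" "?t \<in> cauchy_seqs W d" using C_car_rep A B by blast+
  then have W: "\<forall>n. ?s n \<in> W" "\<forall>n. ?t n \<in> W" unfolding cauchy_seqs_def by auto
  have eq: "(\<lambda>n. d (?s n) (?t n)) = (\<lambda>n. taxicab (h (?s n)) (h (?t n)))" using Hd W by auto
  have "(\<lambda>n. taxicab (h (?s n)) (h (?t n))) \<longlonglongrightarrow> taxicab (F A) (F B)"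
    using conv_dist F_conv A B by blast
  then have "lim (\<lambda>n. d (?s n) (?t n)) = taxicab (F A) (F B)" unfolding eq by (rule limI)
  then show ?thesis unfolding C_dist_def .
qed

lemma const_conv: "p \<in> M0 \<Longrightarrow> conv h (\<lambda>n. S p) p \<and> (\<lambda>n. S p) \<in> cauchy_seqs W d"
proof -
  assume p: "p \<in> M0"
  have "S p \<in> W" "h (S p) = p" using HS p by auto
  then have c: "conv h (\<lambda>n. S p) p" unfolding conv_def by simp
  have "\<forall>n. (\<lambda>n. S p) n \<in> W" using \<open>S p \<in> W\<close> by simp
  then show ?thesis using conv_cauchy[OF _ c] c by blast
qed

lemma CS_car: "p \<in> M0 \<Longrightarrow> C_S W d S p \<in> C_car W d"
  unfolding C_S_def C_car_def using const_conv by (intro quotientI) blast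

lemma F_CS: assumes p: "p \<in> M0" shows "F (C_S W d S p) = p"
proof -
  have AC: "C_S W d S p \<in> C_car W d" using CS_car p .
  let ?s = "SOME \<sigma>. \<sigma> \<in> C_S W d S p"
  have "?s \<in> C_S W d S p" using C_car_rep[OF AC] by blast
  then have "((\<lambda>n. S p), ?s) \<in> ceq W d" unfolding C_S_def by simp
  then have "conv h ?s p" using ceq_conv const_conv[OF p] by blast
  moreover have "conv h ?s (F (C_S W d S p))" using F_conv[OF AC] by blast
  ultimately show ?thesis using conv_unique by metis
qed

lemma G_CS: assumes p: "p \<in> M0" shows "G p = C_S W d S p"
proof -
  have pU: "p \<in> U0" using p M0_U0 by blast
  have "(seqp p, (\<lambda>n. S p)) \<in> ceq W d"
    using conv_ceq[OF seqp_cauchy[OF pU] _ seqp_conv[OF pU]] const_conv[OF p] by blast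
  then show ?thesis unfolding G_def C_S_def using equiv_class_eq[OF equiv_ceq] by blast
qed

lemma iso: "sq_isomorphic (C_car W d) (C_dist d) (C_S W d S) U0 taxicab (\<lambda>p. p)"
  unfolding sq_isomorphic_def
proof (intro exI conjI)
  have a1: "F ` C_car W d \<subseteq> U0" using F_conv by blast
  have a2: "\<forall>x\<in>C_car W d. \<forall>y\<in>C_car W d. taxicab (F x) (F y) \<le> C_dist d x y"
    using C_dist_F by simp
  have a3: "\<forall>p\<in>M0. F (C_S W d S p) = p" using F_CS by blast
  show "sq_hom (C_car W d) (C_dist d) (C_S W d S) U0 taxicab (\<lambda>p. p) F"
    unfolding sq_hom_def using a1 a2 a3 by (intro conjI)
  have b1: "G ` U0 \<subseteq> C_car W d" using G_car by blast
  have b2: "\<forall>p\<in>U0. \<forall>q\<in>U0. C_dist d (G p) (G q) \<le> taxicab p q"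
  proof (intro ballI)
    fix p q assume "p \<in> U0" "q \<in> U0"
    then show "C_dist d (G p) (G q) \<le> taxicab p q"
      using C_dist_F[OF G_car G_car] F_G by simp
  qed
  have b3: "\<forall>p\<in>M0. G p = C_S W d S p" using G_CS by blast
  show "sq_hom U0 taxicab (\<lambda>p. p) (C_car W d) (C_dist d) (C_S W d S) G"
    unfolding sq_hom_def using b1 b2 b3 by (intro conjI)
  show "\<forall>x\<in>C_car W d. G (F x) = x" using G_F by blast
  show "\<forall>y\<in>U0. F (G y) = y" using F_G by blast
qed

end

theorem mainTheorem9:
  fixes W :: "'a set" and d :: "'a \<Rightarrow> 'a \<Rightarrow> real" and S :: "real \<times> real \<Rightarrow> 'a"
    and lam :: "((nat \<times> nat) \<times> 'a) set \<Rightarrow> 'a"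
  assumes "initial_alg W d S lam"
  shows "sq_isomorphic (C_car W d) (C_dist d) (C_S W d S) U0 taxicab (\<lambda>p. p)"
proof -
  have alg: "is_alg W d S lam" using assms unfolding initial_alg_def by (elim conjE) assumption
  obtain h where h1: "\<forall>x\<in>W. h x \<in> U0" and h2: "\<forall>x\<in>W. \<forall>y\<in>W. taxicab (h x) (h y) \<le> d x y"
    and h3: "\<forall>p\<in>M0. h (S p) = p" and h4: "\<forall>A\<in>tens_car W S. \<forall>a\<in>A. h (lam A) = pos h a"
    using exists_h[OF assms] by blast
  interpret w: walg W d S lam h
    by (rule walg.intro[OF alg h1 h2 h3 h4])
  have surj: "\<forall>x\<in>W. \<exists>m x'. m \<in> Nset \<and> x' \<in> W \<and> x = lam (cls S m x')"
    using lambek[OF assms] .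
  have dle: "\<forall>x\<in>W. \<forall>y\<in>W. d x y \<le> taxicab (h x) (h y)" using w.d_le_taxi[OF surj] .
  have Hd: "\<forall>x\<in>W. \<forall>y\<in>W. d x y = taxicab (h x) (h y)"
    using dle h2 by (meson antisym)
  have Hden: "\<forall>k. \<forall>p\<in>U0. \<exists>w\<in>W. taxicab (h w) p \<le> 2 / 3 ^ k" using w.density by blast
  have HS: "\<forall>p\<in>M0. S p \<in> W \<and> h (S p) = p" using w.SW' h3 by blast
  interpret c: cmpl W d S h
    by (rule cmpl.intro[OF h1 Hd Hden HS])
  show ?thesis by (rule c.iso)
qed

end
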